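(* Let $C=(V,E)$ be a cycle graph of length $n\ge1$ with vertices $V=\{v_1,\dots,v_n\}$ in counterclockwise order and edges $E=\{e_1,\dots,e_n\}$, $e_i$ joining $v_i$ and $v_{i+1}$ (indices mod $n$). For a partition $\pi$ of $V$ the following are equivalent: (i) the quotient graph $C^\pi$ is a cactus; (ii) $\pi$ is non-crossing. Furthermore, if $\pi$ is non-crossing, the pads of $C^\pi$ correspond bijectively to the blocks of the Kreweras complement $\mathcal{K}(\pi)$, a block $B=\{e_{i_1},\dots,e_{i_k}\}$ ($i_1<\dots<i_k$) corresponding to the pad with edges $e_{i_1},\dots,e_{i_k}$ passing through the vertices $v_{i_1}$, $v_{i_1+1}\overset{\pi}{\sim}v_{i_2}$, $\dots$, $v_{i_{k-1}+1}\overset{\pi}{\sim}v_{i_k}$, $v_{i_k+1}\overset{\pi}{\sim}v_{i_1}$. Suppose in addition that $C$ is directed (not necessarily a directed cycle); call $e_i$ counterclockwise if $\mathrm{src}(e_i)=v_i$ and clockwise if $\mathrm{src}(e_i)=v_{i+1}$. Then for $\pi$ a partition of $V$ the following are equivalent: (I) $C^\pi$ is an oriented cactus; (II) $\pi$ is non-crossing and each block of $\mathcal{K}(\pi)$ contains only edges of one orientation.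
   Context: $C^\pi$ is the multigraph obtained from $C$ by identifying the vertices in each block of $\pi$ (edges are kept). A cactus is a connected multigraph in which every edge belongs to exactly one simple cycle (loops and pairs of parallel edges count as cycles); these cycles are its pads. An oriented cactus is a directed multigraph whose underlying multigraph is a cactus and each pad of which is a directed cycle. A partition $\pi$ of $V$ is non-crossing if there are no $a<b<c<d$ with $v_a,v_c$ in one block and $v_b,v_d$ in a different block. For non-crossing $\pi$, the Kreweras complement $\mathcal{K}(\pi)$ is the coarsest partition $\sigma$ of $E$ such that $\pi\cup\sigma$ is a non-crossing partition of the interlaced linearly ordered set $v_1<e_1<v_2<e_2<\dots<v_n<e_n$. *)

theory Defs
  imports Main "HOL-Library.Disjoint_Sets"
begin

text \<open>Multigraphs are given by a vertex set V, an edge set E and endpoint maps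
  src, tgt (for undirected multigraphs the order of the endpoints is ignored).\<close>

text \<open>A cyclic sequence of distinct vertices ws and distinct edges es, edge j joining
  ws!j and ws!((j+1) mod k) (in either direction). Loops (k = 1) and pairs of
  parallel edges (k = 2) are included.\<close>
definition ucycle_seq :: "'e set \<Rightarrow> ('e \<Rightarrow> 'v) \<Rightarrow> ('e \<Rightarrow> 'v) \<Rightarrow> 'v list \<Rightarrow> 'e list \<Rightarrow> bool" where
  "ucycle_seq E s t ws es \<longleftrightarrow> length ws = length es \<and> es \<noteq> [] \<and> distinct ws \<and> distinct es \<and>
     set es \<subseteq> E \<and>
     (\<forall>j<length es. (s (es!j) = ws!j \<and> t (es!j) = ws!((j+1) mod length es)) \<or>
                     (s (es!j) = ws!((j+1) mod length es) \<and> t (es!j) = ws!j))"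

definition dcycle_seq :: "'e set \<Rightarrow> ('e \<Rightarrow> 'v) \<Rightarrow> ('e \<Rightarrow> 'v) \<Rightarrow> 'v list \<Rightarrow> 'e list \<Rightarrow> bool" where
  "dcycle_seq E s t ws es \<longleftrightarrow> length ws = length es \<and> es \<noteq> [] \<and> distinct ws \<and> distinct es \<and>
     set es \<subseteq> E \<and>
     (\<forall>j<length es. s (es!j) = ws!j \<and> t (es!j) = ws!((j+1) mod length es))"

definition simple_cycle :: "'e set \<Rightarrow> ('e \<Rightarrow> 'v) \<Rightarrow> ('e \<Rightarrow> 'v) \<Rightarrow> 'e set \<Rightarrow> bool" where
  "simple_cycle E s t S \<longleftrightarrow> (\<exists>ws es. ucycle_seq E s t ws es \<and> S = set es)"

definition mg_connected :: "'v set \<Rightarrow> 'e set \<Rightarrow> ('e \<Rightarrow> 'v) \<Rightarrow> ('e \<Rightarrow> 'v) \<Rightarrow> bool" where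
  "mg_connected V E s t \<longleftrightarrow> V \<noteq> {} \<and>
     (\<forall>u\<in>V. \<forall>v\<in>V. (\<lambda>x y. \<exists>e\<in>E. (s e = x \<and> t e = y) \<or> (s e = y \<and> t e = x))\<^sup>*\<^sup>* u v)"

definition is_cactus :: "'v set \<Rightarrow> 'e set \<Rightarrow> ('e \<Rightarrow> 'v) \<Rightarrow> ('e \<Rightarrow> 'v) \<Rightarrow> bool" where
  "is_cactus V E s t \<longleftrightarrow> mg_connected V E s t \<and> (\<forall>e\<in>E. \<exists>!S. simple_cycle E s t S \<and> e \<in> S)"

definition pads :: "'e set \<Rightarrow> ('e \<Rightarrow> 'v) \<Rightarrow> ('e \<Rightarrow> 'v) \<Rightarrow> 'e set set" where
  "pads E s t = {S. simple_cycle E s t S}"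

definition is_oriented_cactus :: "'v set \<Rightarrow> 'e set \<Rightarrow> ('e \<Rightarrow> 'v) \<Rightarrow> ('e \<Rightarrow> 'v) \<Rightarrow> bool" where
  "is_oriented_cactus V E s t \<longleftrightarrow> is_cactus V E s t \<and>
     (\<forall>S\<in>pads E s t. \<exists>ws es. dcycle_seq E s t ws es \<and> S = set es)"

definition noncrossing :: "nat set set \<Rightarrow> bool" where
  "noncrossing P \<longleftrightarrow> \<not> (\<exists>a b c d. a < b \<and> b < c \<and> c < d \<and>
      (\<exists>B\<in>P. \<exists>B'\<in>P. B \<noteq> B' \<and> a \<in> B \<and> c \<in> B \<and> b \<in> B' \<and> d \<in> B'))"

text \<open>Cycle C with n vertices: vertex v_(i+1) is i, edge e_(i+1) is i, for i < n;
  edge i joins i and (i+1) mod n. Interlaced order: vertex i at 2i, edge i at 2i+1.\<close>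
definition interlace :: "nat set set \<Rightarrow> nat set set \<Rightarrow> nat set set" where
  "interlace \<pi> \<sigma> = (\<lambda>B. (\<lambda>i. 2*i) ` B) ` \<pi> \<union> (\<lambda>B. (\<lambda>i. 2*i+1) ` B) ` \<sigma>"

definition is_kreweras :: "nat \<Rightarrow> nat set set \<Rightarrow> nat set set \<Rightarrow> bool" where
  "is_kreweras n \<pi> \<sigma> \<longleftrightarrow> partition_on {..<n} \<sigma> \<and> noncrossing (interlace \<pi> \<sigma>) \<and>
     (\<forall>\<sigma>'. partition_on {..<n} \<sigma>' \<and> noncrossing (interlace \<pi> \<sigma>') \<longrightarrow>
            (\<forall>B'\<in>\<sigma>'. \<exists>B\<in>\<sigma>. B' \<subseteq> B))"

definition kreweras :: "nat \<Rightarrow> nat set set \<Rightarrow> nat set set" where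
  "kreweras n \<pi> = (THE \<sigma>. is_kreweras n \<pi> \<sigma>)"

definition blockof :: "nat set set \<Rightarrow> nat \<Rightarrow> nat set" where
  "blockof P i = (THE B. B \<in> P \<and> i \<in> B)"

definition cyc_a :: "nat \<Rightarrow> nat \<Rightarrow> nat" where "cyc_a n i = i"
definition cyc_b :: "nat \<Rightarrow> nat \<Rightarrow> nat" where "cyc_b n i = Suc i mod n"

definition dsrc :: "nat \<Rightarrow> (nat \<Rightarrow> bool) \<Rightarrow> nat \<Rightarrow> nat" where
  "dsrc n ccw i = (if ccw i then i else Suc i mod n)"
definition dtgt :: "nat \<Rightarrow> (nat \<Rightarrow> bool) \<Rightarrow> nat \<Rightarrow> nat" where
  "dtgt n ccw i = (if ccw i then Suc i mod n else i)"

text \<open>Quotient C^\<pi>: vertex set \<pi>, edge set {..<n}, endpoints mapped to their blocks.\<close>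
definition quot :: "nat set set \<Rightarrow> (nat \<Rightarrow> nat) \<Rightarrow> nat \<Rightarrow> nat set" where
  "quot \<pi> f i = blockof \<pi> (f i)"

end

theory Submission
  imports Defs
begin




lemma blockof_in:
  assumes "partition_on A P" "x \<in> A"
  shows "blockof P x \<in> P \<and> x \<in> blockof P x"
proof -
  have ex: "\<exists>!B. B \<in> P \<and> x \<in> B"
    using assms unfolding partition_on_def disjoint_def by blast
  show ?thesis unfolding blockof_def using theI'[OF ex] by blast
qed

lemma blockof_eq:
  assumes "partition_on A P" "B \<in> P" "x \<in> B"
  shows "blockof P x = B"
proof -
  have ex: "\<exists>!B. B \<in> P \<and> x \<in> B"
    using assms unfolding partition_on_def disjoint_def by blast
  show ?thesis unfolding blockof_def using the1_equality[OF ex] assms by blast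
qed

lemma mod_suc_if: "x < k \<Longrightarrow> Suc x mod k = (if Suc x = k then 0 else Suc x)"
  by (cases "Suc x = k") auto

lemma mod_suc_inj: "p < k \<Longrightarrow> q < k \<Longrightarrow> Suc p mod k = Suc q mod k \<Longrightarrow> p = q"
  using mod_suc_if[of p k] mod_suc_if[of q k] by (auto split: if_splits)

lemma change_exists:
  assumes "p < k" "q < k" "f p" "\<not> f q"
  shows "\<exists>r<k. f r \<and> \<not> f (Suc r mod k)"
proof (rule ccontr)
  assume H: "\<not> ?thesis"
  have k0: "k > 0" using assms by auto
  have "f ((p + m) mod k)" for m
  proof (induction m)
    case 0 then show ?case using assms by simp
  next
    case (Suc m)
    have "(p+m) mod k < k" using k0 by simp
    with H Suc.IH have "f (Suc ((p+m) mod k) mod k)" by blast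
    moreover have "Suc ((p+m) mod k) mod k = (p + Suc m) mod k" by (simp add: mod_Suc_eq)
    ultimately show ?case by simp
  qed
  from this[of "q + k - p"] have "f ((p + (q + k - p)) mod k)" .
  moreover have "(p + (q + k - p)) mod k = q" using assms by simp
  ultimately show False using assms by simp
qed

lemma single_change:
  fixes f :: "nat \<Rightarrow> bool"
  assumes "p0 < k" "\<forall>p<k. (f p \<noteq> f (Suc p mod k)) \<longleftrightarrow> p = p0"
  shows False
proof -
  have k0: "Suc p0 mod k < k" using assms by simp
  have ch: "f p0 \<noteq> f (Suc p0 mod k)" using assms by blast
  obtain a b where ab: "a < k" "b < k" "f a" "\<not> f b"
  proof (cases "f p0")
    case True then show ?thesis using that[of p0 "Suc p0 mod k"] ch assms(1) k0 by simp
  next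
    case False then show ?thesis using that[of "Suc p0 mod k" p0] ch assms(1) k0 by simp
  qed
  obtain r where r: "r < k" "f r" "\<not> f (Suc r mod k)" using change_exists[OF ab] by blast
  obtain r' where r': "r' < k" "\<not> f r'" "f (Suc r' mod k)"
    using change_exists[of b k a "\<lambda>x. \<not> f x"] ab by auto
  have "r = p0" using r assms(2) by auto
  moreover have "r' = p0" using r' assms(2) by auto
  ultimately show False using r r' by simp
qed

lemma doubleton_single: "{a,b} = {c} \<Longrightarrow> a = b"
  by (metis insertI1 insert_commute singletonD)

lemma ucycle_ends:
  assumes "ucycle_seq E s t ws es" "p < length es"
  shows "{s (es!p), t (es!p)} = {ws!p, ws!(Suc p mod length es)}"
  using assms unfolding ucycle_seq_def by auto

lemma ucycle_sub_eq:
  assumes C: "ucycle_seq E s t ws es" and C': "ucycle_seq E s t ws' es'" and sub: "set es' \<subseteq> set es"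
  shows "set es' = set es"
proof (rule ccontr)
  assume ne: "set es' \<noteq> set es"
  define k where "k = length es"
  define k' where "k' = length es'"
  have lk: "length ws = k" "length ws' = k'" and k'0: "k' > 0" and k0: "k > 0"
    and dws: "distinct ws" "distinct ws'" and des: "distinct es" "distinct es'"
    using C C' by (auto simp: ucycle_seq_def k_def k'_def)
  have "\<exists>x\<in>set es. x \<notin> set es'" using sub ne by blast
  then obtain q where q: "q < k" "es!q \<notin> set es'"
    by (auto simp: in_set_conv_nth k_def)
  have "es'!0 \<in> set es" using sub nth_mem[OF k'0[unfolded k'_def]] by blast
  then obtain p where p: "p < k" "es!p = es'!0"
    by (auto simp: in_set_conv_nth k_def)
  have pin: "es!p \<in> set es'" using p k'0 k'_def by simp
  obtain r where r: "r<k" "es!r \<in> set es'" "es!(Suc r mod k) \<notin> set es'"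
    using change_exists[of p k q "\<lambda>r. es!r \<in> set es'"] p q pin by blast
  define r1 where "r1 = Suc r mod k"
  have r1k: "r1 < k" using k0 by (simp add: r1_def)
  have rr1: "r \<noteq> r1" using r by (auto simp: r1_def)
  obtain m where m: "m < k'" "es'!m = es!r" using r(2) by (auto simp: in_set_conv_nth k'_def)
  define m1 where "m1 = Suc m mod k'"
  have m1k: "m1 < k'" using k'0 by (simp add: m1_def)
  have E1: "{s (es!r), t (es!r)} = {ws!r, ws!r1}"
    using ucycle_ends[OF C, of r] r by (simp add: k_def r1_def)
  have E2: "{s (es'!m), t (es'!m)} = {ws'!m, ws'!m1}"
    using ucycle_ends[OF C', of m] m by (simp add: k'_def m1_def)
  have wne: "ws!r \<noteq> ws!r1" using dws lk r rr1 r1k by (simp add: nth_eq_iff_index_eq)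
  have "\<exists>f'\<in>set es'. f' \<noteq> es!r \<and> (ws!r1 = s f' \<or> ws!r1 = t f')"
  proof (cases "ws!r1 = ws'!m1")
    case True
    have "m \<noteq> m1"
    proof
      assume "m = m1"
      then have "{ws!r, ws!r1} = {ws'!m}" using E1 E2 m by simp
      from doubleton_single[OF this] wne show False by simp
    qed
    then have "es'!m1 \<noteq> es'!m" using m(1) m1k des(2) by (simp add: nth_eq_iff_index_eq k'_def)
    then have "es'!m1 \<noteq> es!r" using m by simp
    moreover have "ws!r1 \<in> {s (es'!m1), t (es'!m1)}"
      using ucycle_ends[OF C', of m1] m1k True k'_def by simp
    ultimately show ?thesis using m1k k'_def by (intro bexI[of _ "es'!m1"]) auto
  next
    case False
    have EE: "{ws!r, ws!r1} = {ws'!m, ws'!m1}" using E1 E2 m by simp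
    have "ws!r1 \<in> {ws'!m, ws'!m1}" unfolding EE[symmetric] by simp
    then have v: "ws!r1 = ws'!m" using False by simp
    define m0 where "m0 = (m + k' - 1) mod k'"
    have m0k: "m0 < k'" using k'0 by (simp add: m0_def)
    have sm0: "Suc m0 mod k' = m"
    proof (cases "m = 0")
      case True then show ?thesis using k'0 by (simp add: m0_def)
    next
      case False
      have e: "m + k' - 1 = (m - 1) + k'" using False m by simp
      have "m0 = ((m - 1) + k') mod k'" by (simp only: m0_def e)
      also have "\<dots> = m - 1" using m by simp
      finally have "m0 = m - 1" .
      then show ?thesis using False m by simp
    qed
    have "m0 \<noteq> m"
    proof
      assume "m0 = m"
      then have "m1 = m" using sm0 m1_def by simp
      then have "{ws!r, ws!r1} = {ws'!m}" using E1 E2 m by simp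
      from doubleton_single[OF this] wne show False by simp
    qed
    then have "es'!m0 \<noteq> es'!m" using m(1) m0k des(2) by (simp add: nth_eq_iff_index_eq k'_def)
    then have "es'!m0 \<noteq> es!r" using m by simp
    moreover have "ws!r1 \<in> {s (es'!m0), t (es'!m0)}"
      using ucycle_ends[OF C', of m0] m0k sm0 v k'_def by simp
    ultimately show ?thesis using m0k k'_def by (intro bexI[of _ "es'!m0"]) auto
  qed
  then obtain f' where f': "f' \<in> set es'" "f' \<noteq> es!r" "ws!r1 = s f' \<or> ws!r1 = t f'"
    by (elim bexE conjE) simp
  have "f' \<in> set es" by (rule subsetD[OF sub f'(1)])
  then obtain l where l: "l < k" "es!l = f'" by (auto simp: in_set_conv_nth k_def)
  have r1n: "es!r1 \<notin> set es'" using r(3) unfolding r1_def .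
  have lk1: "Suc l mod k < k" using k0 by simp
  have "ws!r1 \<in> {ws!l, ws!(Suc l mod k)}"
    using ucycle_ends[OF C, of l] l f'(3) by (auto simp: k_def)
  then have "ws!r1 = ws!l \<or> ws!r1 = ws!(Suc l mod k)" by simp
  then show False
  proof
    assume "ws!r1 = ws!l"
    then have "r1 = l" using dws(1) lk r1k l(1) by (simp add: nth_eq_iff_index_eq)
    then have "es!l \<notin> set es'" using r1n by simp
    then show False using f' l by simp
  next
    assume "ws!r1 = ws!(Suc l mod k)"
    then have "r1 = Suc l mod k" using dws(1) lk r1k lk1 by (simp add: nth_eq_iff_index_eq)
    then have "Suc l mod k = Suc r mod k" unfolding r1_def by simp
    then have "l = r" using mod_suc_inj[of l k r] l(1) r(1) by simp
    then show False using f' l by simp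
  qed
qed



definition adj :: "'e set \<Rightarrow> ('e \<Rightarrow> 'v) \<Rightarrow> ('e \<Rightarrow> 'v) \<Rightarrow> 'v \<Rightarrow> 'v \<Rightarrow> bool" where
  "adj F s t x y \<longleftrightarrow> (\<exists>e\<in>F. (s e = x \<and> t e = y) \<or> (s e = y \<and> t e = x))"

lemma mg_connected_alt:
  "mg_connected V E s t \<longleftrightarrow> V \<noteq> {} \<and> (\<forall>u\<in>V. \<forall>v\<in>V. (adj E s t)\<^sup>*\<^sup>* u v)"
  unfolding mg_connected_def adj_def[abs_def] by simp

definition upath where
  "upath F s t ws es \<longleftrightarrow> length ws = Suc (length es) \<and> distinct ws \<and> set es \<subseteq> F \<and>
     (\<forall>p<length es. {s (es!p), t (es!p)} = {ws!p, ws!Suc p})"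

lemma path_exists:
  "(adj F s t)\<^sup>*\<^sup>* u v \<Longrightarrow> \<exists>ws es. upath F s t ws es \<and> hd ws = u \<and> last ws = v"
proof (induction rule: rtranclp_induct)
  case base
  show ?case by (rule exI[of _ "[u]"], rule exI[of _ "[]"]) (simp add: upath_def)
next
  case (step y z)
  obtain ws es where P: "upath F s t ws es" "hd ws = u" "last ws = y" using step.IH by blast
  obtain g where g: "g \<in> F" "{s g, t g} = {y, z}" using step.hyps(2) unfolding adj_def by blast
  have wsne: "ws \<noteq> []" using P(1) by (auto simp: upath_def)
  show ?case
  proof (cases "z \<in> set ws")
    case True
    then obtain q where q: "q < length ws" "ws!q = z" by (metis in_set_conv_nth)
    have "upath F s t (take (Suc q) ws) (take q es)"
      using P(1) q unfolding upath_def
      by (auto simp: min_def dest: in_set_takeD)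
    moreover have "hd (take (Suc q) ws) = u" using P(2) wsne by simp
    moreover have "last (take (Suc q) ws) = z" using q by (simp add: take_Suc_conv_app_nth)
    ultimately show ?thesis by blast
  next
    case False
    have L: "length ws = Suc (length es)" using P(1) by (simp add: upath_def)
    have lastws: "ws ! length es = y" using P(3) wsne L by (simp add: last_conv_nth)
    have "upath F s t (ws @ [z]) (es @ [g])"
      using P(1) False g L lastws unfolding upath_def
      by (auto simp: nth_append less_Suc_eq)
    moreover have "hd (ws @ [z]) = u" using P(2) wsne by simp
    moreover have "last (ws @ [z]) = z" by simp
    ultimately show ?thesis by blast
  qed
qed

lemma upath_distinct_edges:
  assumes "upath F s t ws es" shows "distinct es"
proof -
  have L: "length ws = Suc (length es)" and D: "distinct ws"
    and E: "\<forall>p<length es. {s (es!p), t (es!p)} = {ws!p, ws!Suc p}"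
    using assms by (auto simp: upath_def)
  show ?thesis
  proof (subst distinct_conv_nth, intro allI impI)
    fix i j assume ij: "i < length es" "j < length es" "i \<noteq> j"
    show "es!i \<noteq> es!j"
    proof
      assume eq: "es!i = es!j"
      then have "{ws!i, ws!Suc i} = {ws!j, ws!Suc j}" using E ij by metis
      then have "(i = j \<and> Suc i = Suc j) \<or> (i = Suc j \<and> Suc i = j)"
        using D L ij by (auto simp: doubleton_eq_iff nth_eq_iff_index_eq)
      then show False using ij by auto
    qed
  qed
qed

lemma cycle_from_path:
  assumes "e \<in> E" "F \<subseteq> E" "e \<notin> F" "(adj F s t)\<^sup>*\<^sup>* (t e) (s e)"
  shows "\<exists>ws es. ucycle_seq E s t ws es \<and> e \<in> set es \<and> set es \<subseteq> insert e F"
proof -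
  obtain ws es where P: "upath F s t ws es" "hd ws = t e" "last ws = s e"
    using path_exists[OF assms(4)] by blast
  define m where "m = length es"
  have L: "length ws = Suc m" and D: "distinct ws" and S: "set es \<subseteq> F"
    and E: "\<forall>p<m. {s (es!p), t (es!p)} = {ws!p, ws!Suc p}"
    using P(1) by (auto simp: upath_def m_def)
  have DE: "distinct es" by (rule upath_distinct_edges[OF P(1)])
  have h0: "ws!0 = t e" using P(2) L by (cases ws) auto
  have "ws \<noteq> []" using L by auto
  then have hm: "ws!m = s e" using P(3) L by (simp add: last_conv_nth)
  have "ucycle_seq E s t ws (es @ [e])"
    unfolding ucycle_seq_def
  proof (intro conjI allI impI)
    show "length ws = length (es @ [e])" using L m_def by simp
    show "es @ [e] \<noteq> []" by simp
    show "distinct ws" by (rule D)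
    show "distinct (es @ [e])" using DE S assms(3) by auto
    show "set (es @ [e]) \<subseteq> E" using S assms by auto
    fix j assume j: "j < length (es @ [e])"
    show "s ((es @ [e]) ! j) = ws ! j \<and> t ((es @ [e]) ! j) = ws ! ((j + 1) mod length (es @ [e])) \<or>
          s ((es @ [e]) ! j) = ws ! ((j + 1) mod length (es @ [e])) \<and> t ((es @ [e]) ! j) = ws ! j"
    proof (cases "j < m")
      case True
      then have "{s (es!j), t (es!j)} = {ws!j, ws!Suc j}" using E by blast
      then show ?thesis using True by (auto simp: nth_append m_def doubleton_eq_iff)
    next
      case False
      then have "j = m" using j m_def by simp
      then show ?thesis using h0 hm by (simp add: nth_append m_def)
    qed
  qed
  then show ?thesis using S by (intro exI[of _ ws] exI[of _ "es@[e]"]) auto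
qed



lemma dcycle_rev:
  assumes "length ws = k" "length es = k" "k > 0" "distinct ws" "distinct es" "set es \<subseteq> E"
    "\<forall>j<k. s (es!j) = ws!(Suc j mod k) \<and> t (es!j) = ws!j"
  shows "dcycle_seq E s t (map (\<lambda>m. ws!((k-m) mod k)) [0..<k]) (rev es)"
  unfolding dcycle_seq_def
proof (intro conjI allI impI)
  show "length (map (\<lambda>m. ws ! ((k - m) mod k)) [0..<k]) = length (rev es)" using assms by simp
  show "rev es \<noteq> []" using assms by auto
  show "distinct (rev es)" using assms by simp
  show "set (rev es) \<subseteq> E" using assms by simp
  have inj: "inj_on (\<lambda>m. ws ! ((k - m) mod k)) {0..<k}"
  proof
    fix a b assume ab: "a \<in> {0..<k}" "b \<in> {0..<k}" "ws ! ((k - a) mod k) = ws ! ((k - b) mod k)"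
    then have "(k - a) mod k = (k - b) mod k" using assms(1,3,4) by (simp add: nth_eq_iff_index_eq)
    then show "a = b" using ab
      by (cases "a = 0"; cases "b = 0") auto
  qed
  show "distinct (map (\<lambda>m. ws ! ((k - m) mod k)) [0..<k])"
    using inj by (simp add: distinct_map)
  fix j assume j: "j < length (rev es)"
  then have jk: "j < k" using assms by simp
  have a: "rev es ! j = es ! (k - Suc j)" using jk assms by (simp add: rev_nth)
  have b: "Suc (k - Suc j) mod k = (k - j) mod k" using jk by (simp add: Suc_diff_Suc)
  have c: "(k - Suc j mod k) mod k = k - Suc j"
  proof (cases "Suc j < k")
    case False then have "Suc j = k" using jk by simp
    then show ?thesis by simp
  qed simp
  have d: "k - Suc j < k" using jk by simp
  have "s (es!(k - Suc j)) = ws!(Suc (k - Suc j) mod k)" using assms(7) d by blast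
  then show "s (rev es ! j) = map (\<lambda>m. ws ! ((k - m) mod k)) [0..<k] ! j"
    using a b jk by simp
  have "t (es!(k - Suc j)) = ws!(k - Suc j)" using assms(7) d by blast
  moreover have "Suc j mod k < k" using jk by simp
  ultimately show "t (rev es ! j) = map (\<lambda>m. ws ! ((k - m) mod k)) [0..<k] ! ((j + 1) mod length (rev es))"
    using a c assms(2) by simp
qed





locale cyc =
  fixes n :: nat and \<pi> :: "nat set set"
  assumes n1: "n \<ge> 1" and part: "partition_on {..<n} \<pi>"
begin

abbreviation blk where "blk x \<equiv> blockof \<pi> x"

lemma blk_in: "x < n \<Longrightarrow> blk x \<in> \<pi>"
  using blockof_in[OF part] by auto

lemma in_blk: "x < n \<Longrightarrow> x \<in> blk x"
  using blockof_in[OF part] by auto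

lemma blk_eq: "P \<in> \<pi> \<Longrightarrow> x \<in> P \<Longrightarrow> blk x = P"
  using blockof_eq[OF part] by auto

lemma blk_sub: "P \<in> \<pi> \<Longrightarrow> P \<subseteq> {..<n}"
  using part unfolding partition_on_def by auto

lemma blk_lt: "P \<in> \<pi> \<Longrightarrow> x \<in> P \<Longrightarrow> x < n"
  using blk_sub by auto

lemma blk_fin: "P \<in> \<pi> \<Longrightarrow> finite P"
  using blk_sub finite_subset by blast

lemma blk_ne: "P \<in> \<pi> \<Longrightarrow> P \<noteq> {}"
  using part unfolding partition_on_def by auto

lemma blk_disj: "P \<in> \<pi> \<Longrightarrow> Q \<in> \<pi> \<Longrightarrow> x \<in> P \<Longrightarrow> x \<in> Q \<Longrightarrow> P = Q"
  using part unfolding partition_on_def disjoint_def by blast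

lemma quot_a: "quot \<pi> (cyc_a n) = (\<lambda>x. blk x)"
  by (simp add: quot_def cyc_a_def fun_eq_iff)

lemma quot_b: "quot \<pi> (cyc_b n) = (\<lambda>x. blk (Suc x mod n))"
  by (simp add: quot_def cyc_b_def fun_eq_iff)

definition inb :: "nat \<Rightarrow> nat \<Rightarrow> nat \<Rightarrow> bool" where
  "inb i j x \<longleftrightarrow> min i j < x \<and> x \<le> max i j"

definition Rk where "Rk i j \<longleftrightarrow> (\<forall>P\<in>\<pi>. \<forall>x\<in>P. \<forall>y\<in>P. inb i j x = inb i j y)"

definition Rrel where "Rrel = {(i,j). i<n \<and> j<n \<and> Rk i j}"

definition K where "K = {..<n} // Rrel"

definition cls where "cls i = Rrel `` {i}"

lemma inb_sym: "inb i j x = inb j i x"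
  unfolding inb_def by auto

lemma inb_xor: "inb i l x = (inb i j x \<noteq> inb j l x)"
  unfolding inb_def by (auto simp: min_def max_def)

lemma Rk_refl: "Rk i i"
  unfolding Rk_def inb_def by auto

lemma Rk_sym: "Rk i j \<Longrightarrow> Rk j i"
  unfolding Rk_def using inb_sym by metis

lemma Rk_trans: "Rk i j \<Longrightarrow> Rk j l \<Longrightarrow> Rk i l"
  unfolding Rk_def using inb_xor[of i l _ j] by metis

lemma equiv_R: "equiv {..<n} Rrel"
proof (rule equivI)
  show "refl_on {..<n} Rrel" unfolding refl_on_def Rrel_def using Rk_refl by auto
  show "sym Rrel" unfolding sym_def Rrel_def using Rk_sym by auto
  show "trans Rrel" unfolding trans_def Rrel_def using Rk_trans by blast
  show "Rrel \<subseteq> {..<n} \<times> {..<n}" unfolding Rrel_def by auto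
qed

lemma cls_eq: "cls i = {j. i < n \<and> j < n \<and> Rk i j}"
  unfolding cls_def Rrel_def by auto

lemma mem_cls: "j \<in> cls i \<longleftrightarrow> i < n \<and> j < n \<and> Rk i j"
  unfolding cls_eq by auto

lemma cls_self: "i < n \<Longrightarrow> i \<in> cls i"
  using Rk_refl mem_cls by auto

lemma cls_same: "j \<in> cls i \<Longrightarrow> cls j = cls i"
  unfolding cls_eq using Rk_sym Rk_trans by blast

lemma K_iff: "B \<in> K \<longleftrightarrow> (\<exists>i<n. B = cls i)"
  unfolding K_def cls_def quotient_def by auto

lemma K_part: "partition_on {..<n} K"
  unfolding K_def by (rule partition_on_quotient[OF equiv_R])

lemma cls_sub: "cls i \<subseteq> {..<n}"
  unfolding cls_eq by auto

lemma Rk_cls: "x \<in> cls i \<Longrightarrow> y \<in> cls i \<Longrightarrow> Rk x y"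
  unfolding cls_eq using Rk_sym Rk_trans by blast

lemma partition_refine_eq:
  assumes "partition_on A s1" "partition_on A s2"
    "\<forall>B\<in>s1. \<exists>C\<in>s2. B \<subseteq> C" "\<forall>C\<in>s2. \<exists>B\<in>s1. C \<subseteq> B"
  shows "s1 = s2"
proof -
  have *: "B \<in> t2" if p1: "partition_on A t1" and p2: "partition_on A t2"
    and r1: "\<forall>B\<in>t1. \<exists>C\<in>t2. B \<subseteq> C" and r2: "\<forall>C\<in>t2. \<exists>B\<in>t1. C \<subseteq> B"
    and B: "B \<in> t1" for t1 t2 B
  proof -
    obtain C where C: "C \<in> t2" "B \<subseteq> C" using r1 B by blast
    obtain B' where B': "B' \<in> t1" "C \<subseteq> B'" using r2 C by blast
    have "B \<noteq> {}" using p1 B unfolding partition_on_def by auto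
    then obtain x where "x \<in> B" by blast
    then have "x \<in> B'" using C B' by auto
    then have "B = B'" using p1 B B' \<open>x \<in> B\<close> unfolding partition_on_def disjoint_def by blast
    then have "B = C" using C B' by auto
    then show ?thesis using C by simp
  qed
  show ?thesis
  proof
    show "s1 \<subseteq> s2" using *[OF assms(1,2,3,4)] by blast
    show "s2 \<subseteq> s1" using *[OF assms(2,1,4,3)] by blast
  qed
qed

lemma NC_elim:
  assumes "noncrossing \<pi>" "a < b" "b < c" "c < d" "P \<in> \<pi>" "Q \<in> \<pi>" "P \<noteq> Q"
    "a \<in> P" "c \<in> P" "b \<in> Q" "d \<in> Q"
  shows False
  using assms unfolding noncrossing_def by blast

end


context cyc begin
lemma interlace_nc:
  assumes nc: "noncrossing \<pi>"
  shows "noncrossing (interlace \<pi> K)"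
  unfolding noncrossing_def
proof (rule notI, elim exE conjE bexE)
  fix a b c d X Y
  assume abcd: "a < b" "b < c" "c < d" and XY: "X \<in> interlace \<pi> K" "Y \<in> interlace \<pi> K" "X \<noteq> Y"
    and mem: "a \<in> X" "c \<in> X" "b \<in> Y" "d \<in> Y"
  consider (VV) P Q where "P \<in> \<pi>" "Q \<in> \<pi>" "X = (\<lambda>i. 2*i) ` P" "Y = (\<lambda>i. 2*i) ` Q"
    | (VE) P C where "P \<in> \<pi>" "C \<in> K" "X = (\<lambda>i. 2*i) ` P" "Y = (\<lambda>i. 2*i+1) ` C"
    | (EV) C P where "P \<in> \<pi>" "C \<in> K" "X = (\<lambda>i. 2*i+1) ` C" "Y = (\<lambda>i. 2*i) ` P"
    | (EE) C D where "C \<in> K" "D \<in> K" "X = (\<lambda>i. 2*i+1) ` C" "Y = (\<lambda>i. 2*i+1) ` D"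
    using XY(1,2) unfolding interlace_def by blast
  then show False
  proof cases
    case VV
    obtain a' c' where "a' \<in> P" "c' \<in> P" "a = 2*a'" "c = 2*c'" using VV mem by blast
    moreover obtain b' d' where "b' \<in> Q" "d' \<in> Q" "b = 2*b'" "d = 2*d'" using VV mem by blast
    moreover have "P \<noteq> Q" using VV XY(3) by blast
    ultimately show False using NC_elim[OF nc, of a' b' c' d' P Q] abcd VV by auto
  next
    case VE
    obtain x y where xy: "x \<in> P" "y \<in> P" "a = 2*x" "c = 2*y" using VE mem by blast
    obtain i j where ij: "i \<in> C" "j \<in> C" "b = 2*i+1" "d = 2*j+1" using VE mem by blast
    obtain i0 where "i0 < n" "C = cls i0" using VE K_iff by blast
    then have "Rk i j" using ij Rk_cls by blast
    then have "inb i j x = inb i j y" using xy VE unfolding Rk_def by blast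
    moreover have "x \<le> i" "i < y" "y \<le> j" using abcd xy ij by auto
    ultimately show False unfolding inb_def by auto
  next
    case EV
    obtain x y where xy: "x \<in> P" "y \<in> P" "b = 2*x" "d = 2*y" using EV mem by blast
    obtain i j where ij: "i \<in> C" "j \<in> C" "a = 2*i+1" "c = 2*j+1" using EV mem by blast
    obtain i0 where "i0 < n" "C = cls i0" using EV K_iff by blast
    then have "Rk i j" using ij Rk_cls by blast
    then have "inb i j x = inb i j y" using xy EV unfolding Rk_def by blast
    moreover have "i < x" "x \<le> j" "j < y" using abcd xy ij by auto
    ultimately show False unfolding inb_def by auto
  next
    case EE
    obtain i j where ij: "i \<in> C" "j \<in> C" "a = 2*i+1" "c = 2*j+1" using EE mem by blast
    obtain i' j' where ij': "i' \<in> D" "j' \<in> D" "b = 2*i'+1" "d = 2*j'+1" using EE mem by blast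
    have ord: "i < i'" "i' < j" "j < j'" using abcd ij ij' by auto
    obtain i0 where i0: "i0 < n" "C = cls i0" using EE K_iff by blast
    obtain i1 where i1: "i1 < n" "D = cls i1" using EE K_iff by blast
    have CD: "C \<noteq> D" using EE XY(3) by blast
    have Rij: "Rk i j" using ij i0 Rk_cls by blast
    have Rij': "Rk i' j'" using ij' i1 Rk_cls by blast
    have nR: "\<not> Rk i i'"
    proof
      assume "Rk i i'"
      have "i' < n" using ij' i1 cls_sub by auto
      have "i' \<in> cls i" using \<open>Rk i i'\<close> \<open>i' < n\<close> ij i0 cls_sub mem_cls by auto
      then have "cls i' = cls i" by (rule cls_same)
      moreover have "cls i = C" using ij(1) i0 cls_same by metis
      moreover have "cls i' = D" using ij'(1) i1 cls_same by metis
      ultimately show False using CD by simp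
    qed
    then obtain P x y where Pxy: "P \<in> \<pi>" "x \<in> P" "y \<in> P" "inb i i' x \<noteq> inb i i' y"
      unfolding Rk_def by blast
    have key: False if A: "x' \<in> P" "y' \<in> P" "inb i i' x'" "\<not> inb i i' y'" for x' y'
    proof -
      have x': "i < x'" "x' \<le> i'" using A ord unfolding inb_def by auto
      have "inb i j x' = inb i j y'" using Rij Pxy A unfolding Rk_def by blast
      then have "i < y'" "y' \<le> j" using x' ord unfolding inb_def by auto
      then have y': "i' < y'" "y' \<le> j" using A ord unfolding inb_def by auto
      have "inb i' j' x' = inb i' j' y'" using Rij' Pxy A unfolding Rk_def by blast
      then show False using x' y' ord unfolding inb_def by auto
    qed
    show False
    proof (cases "inb i i' x")
      case True then show False using key[of x y] Pxy by simp
    next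
      case False then show False using key[of y x] Pxy by simp
    qed
  qed
qed

end


context cyc begin
lemma NC_gen:
  assumes "noncrossing S" "a < b" "b < c" "c < d" "X \<in> S" "Y \<in> S" "X \<noteq> Y"
    "a \<in> X" "c \<in> X" "b \<in> Y" "d \<in> Y"
  shows False
proof -
  have "\<exists>a b c d. a < b \<and> b < c \<and> c < d \<and> (\<exists>B\<in>S. \<exists>B'\<in>S. B \<noteq> B' \<and> a \<in> B \<and> c \<in> B \<and> b \<in> B' \<and> d \<in> B')"
    by (intro exI[of _ a] exI[of _ b] exI[of _ c] exI[of _ d] conjI bexI[of _ X] bexI[of _ Y]) (use assms in auto)
  with assms(1) show False unfolding noncrossing_def by (rule notE)
qed

lemma K_max:
  assumes p: "partition_on {..<n} s" and nc: "noncrossing (interlace \<pi> s)" and B: "B \<in> s"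
  shows "\<exists>C\<in>K. B \<subseteq> C"
proof -
  have "B \<noteq> {}" using partition_onD3[OF p] B by auto
  then obtain i where i: "i \<in> B" by blast
  have Bsub: "B \<subseteq> {..<n}" using partition_onD1[OF p] B by auto
  have "B \<subseteq> cls i"
  proof
    fix j assume j: "j \<in> B"
    have ijn: "i < n" "j < n" using i j Bsub by auto
    have "Rk i j"
    proof (rule ccontr)
      assume "\<not> Rk i j"
      then obtain P x y where Pxy: "P \<in> \<pi>" "x \<in> P" "y \<in> P" "inb i j x \<noteq> inb i j y"
        unfolding Rk_def by blast
      have key: False if A: "x' \<in> P" "y' \<in> P" "inb i j x'" "\<not> inb i j y'" for x' y'
      proof -
        define lo where "lo = min i j"
        define hi where "hi = max i j"
        have lohi: "lo \<in> B" "hi \<in> B" using i j by (auto simp: lo_def hi_def min_def max_def)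
        have x': "lo < x'" "x' \<le> hi" using A unfolding inb_def lo_def hi_def by auto
        have y': "y' \<le> lo \<or> hi < y'" using A unfolding inb_def lo_def hi_def by auto
        have X: "(\<lambda>t. 2*t) ` P \<in> interlace \<pi> s" using Pxy unfolding interlace_def by blast
        have Y: "(\<lambda>t. 2*t+1) ` B \<in> interlace \<pi> s" using B unfolding interlace_def by blast
        have XY: "(\<lambda>t. 2*t) ` P \<noteq> (\<lambda>t. 2*t+1) ` B"
        proof
          assume eq: "(\<lambda>t. 2*t) ` P = (\<lambda>t. 2*t+1) ` B"
          have "2*x' \<in> (\<lambda>t. 2*t) ` P" using A by blast
          then have "2*x' \<in> (\<lambda>t. 2*t+1) ` B" using eq by simp
          then obtain t where "2*x' = 2*t+1" by blast
          then show False by presburger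
        qed
        have m1: "2*x' \<in> (\<lambda>t. 2*t) ` P" "2*y' \<in> (\<lambda>t. 2*t) ` P" using A by blast+
        have m2: "2*lo+1 \<in> (\<lambda>t. 2*t+1) ` B" "2*hi+1 \<in> (\<lambda>t. 2*t+1) ` B" using lohi by blast+
        from y' show False
        proof
          assume "y' \<le> lo"
          then have "2*y' < 2*lo+1" "2*lo+1 < 2*x'" "2*x' < 2*hi+1" using x' by auto
          then show False using NC_gen[OF nc _ _ _ X Y XY m1(2) m1(1) m2(1) m2(2)] by blast
        next
          assume "hi < y'"
          then have "2*lo+1 < 2*x'" "2*x' < 2*hi+1" "2*hi+1 < 2*y'" using x' by auto
          then show False using NC_gen[OF nc _ _ _ Y X XY[symmetric] m2(1) m2(2) m1(1) m1(2)] by blast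
        qed
      qed
      show False
      proof (cases "inb i j x")
        case True then show False using key[of x y] Pxy by simp
      next
        case False then show False using key[of y x] Pxy by simp
      qed
    qed
    then show "j \<in> cls i" using ijn mem_cls by auto
  qed
  moreover have "i < n" using i Bsub by auto
  then have "cls i \<in> K" using K_iff[of "cls i"] by blast
  ultimately show ?thesis by blast
qed

end


context cyc begin
lemma is_kreweras_K:
  assumes "noncrossing \<pi>" shows "is_kreweras n \<pi> K"
  unfolding is_kreweras_def
proof (intro conjI allI impI ballI)
  show "partition_on {..<n} K" by (rule K_part)
  show "noncrossing (interlace \<pi> K)" by (rule interlace_nc[OF assms])
  fix s B assume "partition_on {..<n} s \<and> noncrossing (interlace \<pi> s)" "B \<in> s"
  then show "\<exists>C\<in>K. B \<subseteq> C" using K_max by blast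
qed

lemma kreweras_eq:
  assumes "noncrossing \<pi>" shows "kreweras n \<pi> = K"
proof -
  have "\<sigma> = K" if "is_kreweras n \<pi> \<sigma>" for \<sigma>
  proof (rule partition_refine_eq[of "{..<n}"])
    show "partition_on {..<n} \<sigma>" using that unfolding is_kreweras_def by blast
    show "partition_on {..<n} K" by (rule K_part)
    have "partition_on {..<n} K \<and> noncrossing (interlace \<pi> K)"
      using is_kreweras_K[OF assms] unfolding is_kreweras_def by blast
    then show "\<forall>C\<in>K. \<exists>B\<in>\<sigma>. C \<subseteq> B" using that
      unfolding is_kreweras_def by blast
    show "\<forall>B\<in>\<sigma>. \<exists>C\<in>K. B \<subseteq> C"
    proof
      fix B assume "B \<in> \<sigma>"
      moreover have "partition_on {..<n} \<sigma>" "noncrossing (interlace \<pi> \<sigma>)"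
        using that unfolding is_kreweras_def by auto
      ultimately show "\<exists>C\<in>K. B \<subseteq> C" using K_max by blast
    qed
  qed
  then show ?thesis unfolding kreweras_def using is_kreweras_K[OF assms] by (rule the_equality[rotated])
qed

end


context cyc begin

definition dd :: "nat \<Rightarrow> nat \<Rightarrow> nat" where "dd i x = (if x \<le> i then x + n - i else x - i)"

lemma dd_bounds: "i < n \<Longrightarrow> x < n \<Longrightarrow> 1 \<le> dd i x \<and> dd i x \<le> n"
  unfolding dd_def by auto

lemma dd_n: "i < n \<Longrightarrow> x < n \<Longrightarrow> dd i x = n \<longleftrightarrow> x = i"
  unfolding dd_def by auto

lemma dd_inj: "i < n \<Longrightarrow> x < n \<Longrightarrow> y < n \<Longrightarrow> dd i x = dd i y \<Longrightarrow> x = y"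
  unfolding dd_def by (auto split: if_splits)

lemma dd_suc: "i < n \<Longrightarrow> dd i (Suc i mod n) = 1"
proof (cases "Suc i < n")
  case True then show ?thesis by (simp add: dd_def)
next
  case False
  assume "i < n"
  then have "Suc i = n" using False by simp
  then show ?thesis by (simp add: dd_def)
qed

lemma dd_le_inb: "i < n \<Longrightarrow> j < n \<Longrightarrow> x < n \<Longrightarrow> i \<noteq> j \<Longrightarrow>
    (dd i x \<le> dd i j) = (if i < j then inb i j x else \<not> inb i j x)"
  unfolding dd_def inb_def by auto

lemma dd_less: "i < n \<Longrightarrow> x < n \<Longrightarrow> y < n \<Longrightarrow>
    dd i x < dd i y \<longleftrightarrow> ((i < x \<and> (y \<le> i \<or> x < y)) \<or> (x \<le> i \<and> y \<le> i \<and> x < y))"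
  unfolding dd_def by auto

lemma rot_order:
  assumes "i < n" "a < n" "b < n" "c < n" "e < n"
    "dd i a < dd i b" "dd i b < dd i c" "dd i c < dd i e"
  shows "(a<b \<and> b<c \<and> c<e) \<or> (b<c \<and> c<e \<and> e<a) \<or> (c<e \<and> e<a \<and> a<b) \<or> (e<a \<and> a<b \<and> b<c)"
proof -
  have h1: "(i < a \<and> (b \<le> i \<or> a < b)) \<or> (a \<le> i \<and> b \<le> i \<and> a < b)"
    using dd_less assms by blast
  have h2: "(i < b \<and> (c \<le> i \<or> b < c)) \<or> (b \<le> i \<and> c \<le> i \<and> b < c)"
    using dd_less assms by blast
  have h3: "(i < c \<and> (e \<le> i \<or> c < e)) \<or> (c \<le> i \<and> e \<le> i \<and> c < e)"
    using dd_less assms by blast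
  show ?thesis
    by (cases "a \<le> i"; cases "b \<le> i"; cases "c \<le> i"; cases "e \<le> i") (use h1 h2 h3 in auto)
qed

lemma rot_cross:
  assumes nc: "noncrossing \<pi>" and PQ: "P \<in> \<pi>" "Q \<in> \<pi>" "P \<noteq> Q"
    and mem: "a \<in> P" "c \<in> P" "b \<in> Q" "e \<in> Q" and i: "i < n"
    and o: "dd i a < dd i b" "dd i b < dd i c" "dd i c < dd i e"
  shows False
proof -
  have lt: "a < n" "b < n" "c < n" "e < n" using mem PQ blk_lt by auto
  have QP: "Q \<noteq> P" using PQ(3) by simp
  from rot_order[OF i lt o] show False
  proof (elim disjE conjE)
    assume "a<b" "b<c" "c<e"
    then show False using NC_elim[OF nc _ _ _ PQ(1,2,3) mem(1,2,3,4)] by blast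
  next
    assume "b<c" "c<e" "e<a"
    then show False using NC_elim[OF nc _ _ _ PQ(2,1) QP mem(3,4,2,1)] by blast
  next
    assume "c<e" "e<a" "a<b"
    then show False using NC_elim[OF nc _ _ _ PQ(1,2,3) mem(2,1,4,3)] by blast
  next
    assume "e<a" "a<b" "b<c"
    then show False using NC_elim[OF nc _ _ _ PQ(2,1) QP mem(4,3,1,2)] by blast
  qed
qed

lemma next_vertex:
  assumes nc: "noncrossing \<pi>" and i: "i < n" "i' < n" "Rk i i'"
    and mini: "\<forall>m<n. Rk i m \<longrightarrow> dd i i' \<le> dd i m"
  shows "blk (Suc i mod n) = blk i'"
proof -
  define v where "v = Suc i mod n"
  have vn: "v < n" using n1 by (simp add: v_def)
  have dv: "dd i v = 1" using dd_suc i by (simp add: v_def)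
  define P where "P = blk v"
  have P: "P \<in> \<pi>" "v \<in> P" using blk_in in_blk vn P_def by auto
  have finP: "finite P" using blk_fin P by auto
  obtain m where m: "m \<in> P" "\<forall>x\<in>P. dd i x \<le> dd i m"
  proof -
    have "finite (dd i ` P)" "dd i ` P \<noteq> {}" using finP P by auto
    then have "Max (dd i ` P) \<in> dd i ` P" by (rule Max_in)
    then obtain m where "m \<in> P" "dd i m = Max (dd i ` P)" by auto
    moreover have "\<forall>x\<in>P. dd i x \<le> Max (dd i ` P)" using finP by auto
    ultimately show ?thesis using that by auto
  qed
  have mn: "m < n" using m P blk_lt by auto
  have A: "dd i m \<le> dd i i'"
  proof (cases "i = i'")
    case True then show ?thesis using dd_bounds[OF i(1) mn] dd_n[OF i(1) i(2)] by simp
  next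
    case False
    have "inb i i' v = inb i i' m" using i(3) P m(1) unfolding Rk_def by blast
    moreover have "dd i v \<le> dd i i'" using dv dd_bounds[OF i(1) i(2)] by simp
    ultimately show ?thesis
      using dd_le_inb[OF i(1) i(2) vn False] dd_le_inb[OF i(1) i(2) mn False] by (simp split: if_splits)
  qed
  show ?thesis
  proof (cases "m = i'")
    case True
    then have "blk i' = P" using blk_eq P(1) m(1) by simp
    then show ?thesis using P_def v_def by simp
  next
    case False
    have ne: "dd i m \<noteq> dd i i'" using False dd_inj[OF i(1) mn i(2)] by blast
    then have lt: "dd i m < dd i i'" using A by simp
    have mi: "i \<noteq> m" using lt dd_n[OF i(1) i(1)] dd_bounds[OF i(1) i(2)] by auto
    have "Rk i m"
      unfolding Rk_def
    proof (intro ballI)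
      fix Q x y assume Q: "Q \<in> \<pi>" and x: "x \<in> Q" and y: "y \<in> Q"
      have xn: "x < n" "y < n" using Q x y blk_lt by auto
      have key: False if H: "x' \<in> Q" "y' \<in> Q" "dd i x' \<le> dd i m" "dd i m < dd i y'" for x' y'
      proof (cases "Q = P")
        case True
        then have "dd i y' \<le> dd i m" using m(2) H(2) by blast
        then show False using H(4) by simp
      next
        case False
        have x'n: "x' < n" "y' < n" using H Q blk_lt by auto
        have "x' \<noteq> v"
        proof
          assume "x' = v" then have "P = Q" using blk_disj[OF P(1) Q] P(2) H(1) by simp
          then show False using False by simp
        qed
        then have "dd i x' \<noteq> dd i v" using dd_inj[OF i(1) x'n(1) vn] by blast
        then have o1: "dd i v < dd i x'" using dv dd_bounds[OF i(1) x'n(1)] by simp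
        have "x' \<noteq> m"
        proof
          assume "x' = m" then have "P = Q" using blk_disj[OF P(1) Q] m(1) H(1) by simp
          then show False using False by simp
        qed
        then have "dd i x' \<noteq> dd i m" using dd_inj[OF i(1) x'n(1) mn] by blast
        then have o2: "dd i x' < dd i m" using H(3) by simp
        have PQ: "P \<noteq> Q" using False by simp
        show False using rot_cross[OF nc P(1) Q PQ P(2) m(1) H(1) H(2) i(1) o1 o2 H(4)] .
      qed
      have "(dd i x \<le> dd i m) = (dd i y \<le> dd i m)"
      proof (cases "dd i x \<le> dd i m")
        case True
        then show ?thesis using key[of x y] x y by (cases "dd i y \<le> dd i m") auto
      next
        case False
        then show ?thesis using key[of y x] x y by (cases "dd i y \<le> dd i m") auto
      qed
      then show "inb i m x = inb i m y"
        using dd_le_inb[OF i(1) mn xn(1) mi] dd_le_inb[OF i(1) mn xn(2) mi] by (simp split: if_splits)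
    qed
    then have "dd i i' \<le> dd i m" using mini mn by blast
    then show ?thesis using lt by simp
  qed
qed

end


context cyc begin

lemma Ea_simp: "quot \<pi> (cyc_a n) x = blk x"
  by (simp add: quot_def cyc_a_def)

lemma Eb_simp: "quot \<pi> (cyc_b n) x = blk (Suc x mod n)"
  by (simp add: quot_def cyc_b_def)

lemma cls_fin: "finite (cls i)"
  using cls_sub finite_subset by blast

lemma sorted_next:
  assumes i0: "i0 < n" and L: "L = sorted_list_of_set (cls i0)" and j: "j < length L"
  shows "Rk (L!j) (L!(Suc j mod length L)) \<and>
         (\<forall>m<n. Rk (L!j) m \<longrightarrow> dd (L!j) (L!(Suc j mod length L)) \<le> dd (L!j) m)"
proof -
  define k where "k = length L"
  have setL: "set L = cls i0" using L cls_fin by simp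
  have sL: "sorted L" and dL: "distinct L" using L by auto
  have jk: "j < k" using j k_def by simp
  have k0: "k > 0" using jk by linarith
  define i where "i = L!j"
  define i' where "i' = L!(Suc j mod k)"
  have s1: "Suc j mod k < k" using k0 by simp
  have iin: "i \<in> cls i0" using setL jk k_def i_def nth_mem by blast
  have i'in: "i' \<in> cls i0" using setL s1 k_def i'_def nth_mem by blast
  have iin2: "i < n" "i' < n" using iin i'in cls_sub by auto
  have R: "Rk i i'" using Rk_cls iin i'in by blast
  have M: "dd i i' \<le> dd i m" if m: "m < n" "Rk i m" for m
  proof -
    have "m \<in> cls i" using m iin2 mem_cls by auto
    moreover have "cls i = cls i0" using cls_same iin by blast
    ultimately have "m \<in> set L" using setL by simp
    then obtain q where q: "q < k" "L!q = m" using k_def by (auto simp: in_set_conv_nth)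
    show ?thesis
    proof (cases "Suc j < k")
      case True
      then have i'eq: "i' = L!(Suc j)" using i'_def by simp
      have "L!j \<le> L!(Suc j)" using sL True k_def by (simp add: sorted_nth_mono)
      moreover have "L!j \<noteq> L!(Suc j)" using dL True k_def by (simp add: nth_eq_iff_index_eq)
      ultimately have ii': "i < i'" using i_def i'eq by simp
      show ?thesis
      proof (cases "q \<le> j")
        case True
        then have "m \<le> i" using sL jk k_def q i_def by (auto simp: sorted_nth_mono)
        then show ?thesis using ii' iin2 m unfolding dd_def by auto
      next
        case False
        then have "Suc j \<le> q" by simp
        then have "i' \<le> m" using sL q k_def i'eq by (auto simp: sorted_nth_mono)
        then show ?thesis using ii' iin2 m unfolding dd_def by auto
      qed
    next
      case False
      then have jj: "Suc j = k" using jk by simp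
      then have i'eq: "i' = L!0" using i'_def by simp
      have "q \<le> j" using q jj by simp
      then have "m \<le> i" using sL jk k_def q i_def by (auto simp: sorted_nth_mono)
      moreover have "i' \<le> m" using sL q k_def i'eq by (auto simp: sorted_nth_mono)
      ultimately show ?thesis using iin2 m unfolding dd_def by auto
    qed
  qed
  show ?thesis using R M unfolding i_def i'_def k_def by blast
qed

lemma blk_inj_cls:
  assumes "x \<in> cls i0" "y \<in> cls i0" "blk x = blk y"
  shows "x = y"
proof (rule ccontr)
  assume xy: "x \<noteq> y"
  have R: "Rk x y" using Rk_cls assms by blast
  have n: "x < n" "y < n" using assms cls_sub by auto
  have "y \<in> blk x" using assms(3) in_blk[OF n(2)] by simp
  moreover have "x \<in> blk x" using in_blk[OF n(1)] .
  moreover have "blk x \<in> \<pi>" using blk_in[OF n(1)] .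
  ultimately have "inb x y x = inb x y y" using R unfolding Rk_def by blast
  then show False using xy unfolding inb_def by (cases "x < y") (auto simp: min_def max_def)
qed

lemma class_cycle:
  assumes nc: "noncrossing \<pi>" and i0: "i0 < n"
    and L: "L = sorted_list_of_set (cls i0)"
  shows "(\<forall>j<length L. blk (Suc (L!j) mod n) = blk (L!(Suc j mod length L)))
       \<and> ucycle_seq {..<n} (quot \<pi> (cyc_a n)) (quot \<pi> (cyc_b n)) (map blk L) L"
proof -
  have setL: "set L = cls i0" using L cls_fin by simp
  have dL: "distinct L" using L by auto
  have ne: "L \<noteq> []" using setL cls_self[OF i0] by auto
  have P1: "\<forall>j<length L. blk (Suc (L!j) mod n) = blk (L!(Suc j mod length L))"
  proof (intro allI impI)
    fix j assume j: "j < length L"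
    have "0 < length L" using j by linarith
    then have s1: "Suc j mod length L < length L" by simp
    have a: "L!j < n" "L!(Suc j mod length L) < n"
      using setL cls_sub j s1 nth_mem by blast+
    from sorted_next[OF i0 L j] show "blk (Suc (L!j) mod n) = blk (L!(Suc j mod length L))"
      using next_vertex[OF nc a] by blast
  qed
  have dm: "distinct (map blk L)"
  proof -
    have "inj_on blk (set L)" using blk_inj_cls setL by (auto intro: inj_onI)
    then show ?thesis using dL by (simp add: distinct_map)
  qed
  have "ucycle_seq {..<n} (quot \<pi> (cyc_a n)) (quot \<pi> (cyc_b n)) (map blk L) L"
    unfolding ucycle_seq_def
  proof (intro conjI allI impI)
    show "length (map blk L) = length L" by simp
    show "L \<noteq> []" by (rule ne)
    show "distinct (map blk L)" by (rule dm)
    show "distinct L" by (rule dL)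
    show "set L \<subseteq> {..<n}" using setL cls_sub by simp
    fix j assume j: "j < length L"
    have "0 < length L" using j by linarith
    then have s1: "Suc j mod length L < length L" by simp
    show "quot \<pi> (cyc_a n) (L ! j) = map blk L ! j \<and>
          quot \<pi> (cyc_b n) (L ! j) = map blk L ! ((j + 1) mod length L) \<or>
          quot \<pi> (cyc_a n) (L ! j) = map blk L ! ((j + 1) mod length L) \<and>
          quot \<pi> (cyc_b n) (L ! j) = map blk L ! j"
      using P1 j s1 by (simp add: Ea_simp Eb_simp)
  qed
  then show ?thesis using P1 by blast
qed

end


context cyc begin

abbreviation "Ea \<equiv> quot \<pi> (cyc_a n)"
abbreviation "Eb \<equiv> quot \<pi> (cyc_b n)"

lemma pair_neq: "{a,b} = {c,d} \<Longrightarrow> (g a \<noteq> g b) = (g c \<noteq> g d)"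
  by (auto simp: doubleton_eq_iff)

lemma inb_change:
  assumes "e < n" "j < n" "e \<noteq> j" "l < n"
  shows "(inb e j l \<noteq> inb e j (Suc l mod n)) \<longleftrightarrow> (l = e \<or> l = j)"
proof (cases "Suc l < n")
  case True then show ?thesis using assms by (cases "e < j") (auto simp: inb_def min_def max_def)
next
  case False then have "Suc l = n" using assms by simp
  then show ?thesis using assms by (cases "e < j") (auto simp: inb_def min_def max_def)
qed

lemma class_in_cycle:
  assumes C: "ucycle_seq {..<n} Ea Eb ws es"
    and e: "e \<in> set es" and j: "j < n" "Rk e j"
  shows "j \<in> set es"
proof (rule ccontr)
  assume jn: "j \<notin> set es"
  have ej: "e \<noteq> j" using e jn by auto
  define k where "k = length es"
  have sub: "set es \<subseteq> {..<n}" and des: "distinct es" using C by (auto simp: ucycle_seq_def)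
  have en: "e < n" using e sub by auto
  obtain p0 where p0: "p0 < k" "es!p0 = e" using e by (auto simp: in_set_conv_nth k_def)
  define side where "side X = (\<exists>x\<in>X. inb e j x)" for X
  have sb: "side (blk x) = inb e j x" if xn: "x < n" for x
  proof
    assume "side (blk x)"
    then obtain x' where x': "x' \<in> blk x" "inb e j x'" unfolding side_def by blast
    have "inb e j x' = inb e j x" using j(2) blk_in[OF xn] in_blk[OF xn] x'(1) unfolding Rk_def by blast
    then show "inb e j x" using x'(2) by simp
  next
    assume "inb e j x" then show "side (blk x)" unfolding side_def using in_blk[OF xn] by blast
  qed
  have ch: "\<forall>p<k. (side (ws!p) \<noteq> side (ws!(Suc p mod k))) \<longleftrightarrow> p = p0"
  proof (intro allI impI)
    fix p assume p: "p < k"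
    have pin: "es!p \<in> set es" using p k_def by simp
    have pn: "es!p < n" using sub pin by auto
    have sn: "Suc (es!p) mod n < n" using n1 by simp
    have "{blk (es!p), blk (Suc (es!p) mod n)} = {ws!p, ws!(Suc p mod k)}"
      using ucycle_ends[OF C, of p] p k_def by (simp add: Ea_simp Eb_simp)
    then have "(side (blk (es!p)) \<noteq> side (blk (Suc (es!p) mod n))) = (side (ws!p) \<noteq> side (ws!(Suc p mod k)))"
      by (rule pair_neq)
    moreover have "(side (blk (es!p)) \<noteq> side (blk (Suc (es!p) mod n))) = (es!p = e \<or> es!p = j)"
      using sb[OF pn] sb[OF sn] inb_change[OF en j(1) ej pn] by simp
    moreover have "(es!p = e \<or> es!p = j) = (es!p = e)" using jn pin by auto
    moreover have "(es!p = e) = (p = p0)" using des p p0 k_def by (auto simp: nth_eq_iff_index_eq)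
    ultimately show "(side (ws!p) \<noteq> side (ws!(Suc p mod k))) \<longleftrightarrow> p = p0" by simp
  qed
  show False using single_change[of p0 k "\<lambda>p. side (ws!p)"] p0(1) ch by simp
qed

lemma adj_sym: "adj F s t x y = adj F s t y x"
  unfolding adj_def by auto

lemma rtranclp_sym:
  assumes sym: "\<And>x y. r x y \<Longrightarrow> r y x" and "r\<^sup>*\<^sup>* a b" shows "r\<^sup>*\<^sup>* b a"
  using assms(2)
proof (induction rule: rtranclp_induct)
  case base then show ?case by simp
next
  case (step y z)
  have "r z y" using sym step.hyps(2) .
  then show ?case using step.IH by (rule converse_rtranclp_into_rtranclp)
qed

lemma reach_sym: "(adj F s t)\<^sup>*\<^sup>* a b \<Longrightarrow> (adj F s t)\<^sup>*\<^sup>* b a"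
  using rtranclp_sym[of "adj F s t"] adj_sym by metis

lemma reach_arc:
  assumes "i \<le> j" "j \<le> n" "\<forall>l. i \<le> l \<and> l < j \<longrightarrow> l \<in> F"
  shows "(adj F Ea Eb)\<^sup>*\<^sup>* (blk (i mod n)) (blk (j mod n))"
proof -
  have "\<forall>k. i \<le> k \<and> k \<le> j \<longrightarrow> (adj F Ea Eb)\<^sup>*\<^sup>* (blk (i mod n)) (blk (k mod n))"
  proof
    fix k show "i \<le> k \<and> k \<le> j \<longrightarrow> (adj F Ea Eb)\<^sup>*\<^sup>* (blk (i mod n)) (blk (k mod n))"
    proof (induction k)
      case 0 then show ?case by simp
    next
      case (Suc k)
      show ?case
      proof
        assume H: "i \<le> Suc k \<and> Suc k \<le> j"
        show "(adj F Ea Eb)\<^sup>*\<^sup>* (blk (i mod n)) (blk (Suc k mod n))"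
        proof (cases "i = Suc k")
          case True then show ?thesis by simp
        next
          case False
          then have ik: "i \<le> k" "k < j" using H by auto
          then have r: "(adj F Ea Eb)\<^sup>*\<^sup>* (blk (i mod n)) (blk (k mod n))" using Suc.IH by simp
          have kn: "k < n" using ik assms(2) by simp
          have "k \<in> F" using assms(3) ik by simp
          then have "adj F Ea Eb (blk (k mod n)) (blk (Suc k mod n))"
            unfolding adj_def using kn by (auto simp: Ea_simp Eb_simp)
          with r show ?thesis by (rule rtranclp.rtrancl_into_rtrancl)
        qed
      qed
    qed
  qed
  then show ?thesis using assms by blast
qed

lemma connected: "mg_connected \<pi> {..<n} Ea Eb"
  unfolding mg_connected_alt
proof (intro conjI ballI)
  show "\<pi> \<noteq> {}" using blk_in[of 0] n1 by auto
  fix P Q assume P: "P \<in> \<pi>" and Q: "Q \<in> \<pi>"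
  obtain x where x: "x \<in> P" using blk_ne P by blast
  obtain y where y: "y \<in> Q" using blk_ne Q by blast
  have xn: "x < n" "y < n" using x y P Q blk_lt by auto
  have r1: "(adj {..<n} Ea Eb)\<^sup>*\<^sup>* (blk 0) (blk x)"
    using reach_arc[of 0 x "{..<n}"] xn by simp
  have r2: "(adj {..<n} Ea Eb)\<^sup>*\<^sup>* (blk 0) (blk y)"
    using reach_arc[of 0 y "{..<n}"] xn by simp
  have "(adj {..<n} Ea Eb)\<^sup>*\<^sup>* (blk x) (blk y)"
    using reach_sym[OF r1] r2 by (rule rtranclp_trans)
  moreover have "blk x = P" "blk y = Q" using blk_eq P Q x y by auto
  ultimately show "(adj {..<n} Ea Eb)\<^sup>*\<^sup>* P Q" by simp
qed

lemma simple_cycle_eq_cls: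
  assumes nc: "noncrossing \<pi>" and S: "simple_cycle {..<n} Ea Eb S" and e: "e \<in> S"
  shows "S = cls e"
proof -
  obtain ws es where C: "ucycle_seq {..<n} Ea Eb ws es" and Seq: "S = set es"
    using S unfolding simple_cycle_def by blast
  have en: "e < n" using C e Seq by (auto simp: ucycle_seq_def)
  define L where "L = sorted_list_of_set (cls e)"
  have CL: "ucycle_seq {..<n} Ea Eb (map blk L) L" using class_cycle[OF nc en L_def] by blast
  have setL: "set L = cls e" using cls_fin L_def by simp
  have "cls e \<subseteq> set es"
  proof
    fix j assume "j \<in> cls e"
    then have "j < n" "Rk e j" using mem_cls by auto
    then show "j \<in> set es" using class_in_cycle[OF C] e Seq by blast
  qed
  then have "set L = set es" using ucycle_sub_eq[OF C CL] setL by simp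
  then show ?thesis using Seq setL by simp
qed

lemma cls_simple:
  assumes nc: "noncrossing \<pi>" and i: "i < n"
  shows "simple_cycle {..<n} Ea Eb (cls i)"
proof -
  define L where "L = sorted_list_of_set (cls i)"
  have "ucycle_seq {..<n} Ea Eb (map blk L) L" using class_cycle[OF nc i L_def] by blast
  moreover have "set L = cls i" using cls_fin L_def by simp
  ultimately show ?thesis unfolding simple_cycle_def by metis
qed

lemma nc_cactus:
  assumes nc: "noncrossing \<pi>"
  shows "is_cactus \<pi> {..<n} Ea Eb"
  unfolding is_cactus_def
proof (intro conjI ballI)
  show "mg_connected \<pi> {..<n} Ea Eb" by (rule connected)
  fix e assume e: "e \<in> {..<n}"
  show "\<exists>!S. simple_cycle {..<n} Ea Eb S \<and> e \<in> S"
  proof (rule ex1I[of _ "cls e"])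
    show "simple_cycle {..<n} Ea Eb (cls e) \<and> e \<in> cls e" using cls_simple[OF nc] cls_self e by auto
    fix S assume "simple_cycle {..<n} Ea Eb S \<and> e \<in> S"
    then show "S = cls e" using simple_cycle_eq_cls[OF nc] by blast
  qed
qed

lemma nc_pads:
  assumes nc: "noncrossing \<pi>"
  shows "pads {..<n} Ea Eb = K"
proof
  show "pads {..<n} Ea Eb \<subseteq> K"
  proof
    fix S assume "S \<in> pads {..<n} Ea Eb"
    then have S: "simple_cycle {..<n} Ea Eb S" unfolding pads_def by simp
    then obtain ws es where C: "ucycle_seq {..<n} Ea Eb ws es" and Seq: "S = set es"
      unfolding simple_cycle_def by blast
    have "es \<noteq> []" using C by (simp add: ucycle_seq_def)
    then obtain e where e: "e \<in> set es" by (cases es) auto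
    have en: "e < n" using C e by (auto simp: ucycle_seq_def)
    have "S = cls e" using simple_cycle_eq_cls[OF nc S] e Seq by simp
    then show "S \<in> K" using K_iff en by blast
  qed
  show "K \<subseteq> pads {..<n} Ea Eb"
  proof
    fix B assume "B \<in> K"
    then obtain i where "i < n" "B = cls i" using K_iff by blast
    then show "B \<in> pads {..<n} Ea Eb" using cls_simple[OF nc] unfolding pads_def by simp
  qed
qed

end


context cyc begin

definition Sof where "Sof e = (THE S. simple_cycle {..<n} Ea Eb S \<and> e \<in> S)"

lemma Sof_props:
  assumes cact: "is_cactus \<pi> {..<n} Ea Eb" and e: "e < n"
  shows "simple_cycle {..<n} Ea Eb (Sof e) \<and> e \<in> Sof e"
proof -
  have "\<exists>!S. simple_cycle {..<n} Ea Eb S \<and> e \<in> S" using cact e unfolding is_cactus_def by blast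
  then show ?thesis unfolding Sof_def by (rule theI')
qed

lemma Sof_unique:
  assumes cact: "is_cactus \<pi> {..<n} Ea Eb" and e: "e < n"
    and S: "simple_cycle {..<n} Ea Eb S" "e \<in> S"
  shows "S = Sof e"
proof -
  have "\<exists>!S. simple_cycle {..<n} Ea Eb S \<and> e \<in> S" using cact e unfolding is_cactus_def by blast
  then show ?thesis unfolding Sof_def using S by (simp add: the1_equality)
qed

lemma simple_cycle_sub: "simple_cycle E s t S \<Longrightarrow> S \<subseteq> E"
  unfolding simple_cycle_def ucycle_seq_def by auto

lemma Sof_sub:
  assumes cact: "is_cactus \<pi> {..<n} Ea Eb" and e: "e < n"
  shows "Sof e \<subseteq> {..<n}"
  using Sof_props[OF cact e] simple_cycle_sub by blast

lemma Sof_cls: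
  assumes cact: "is_cactus \<pi> {..<n} Ea Eb" and en: "e < n" and f: "f \<in> Sof e"
  shows "f \<in> cls e"
proof -
  have fn: "f < n" using Sof_sub[OF cact en] f by auto
  have "Rk e f"
  proof (rule ccontr)
    assume nR: "\<not> Rk e f"
    then have ef: "e \<noteq> f" using Rk_refl by auto
    define F where "F = {..<n} - {e, f}"
    obtain P x y where Pxy: "P \<in> \<pi>" "x \<in> P" "y \<in> P" "inb e f x \<noteq> inb e f y"
      using nR unfolding Rk_def by blast
    have key: "(adj F Ea Eb)\<^sup>*\<^sup>* (blk (Suc e mod n)) (blk e)"
      if A: "x' \<in> P" "y' \<in> P" "inb e f x'" "\<not> inb e f y'" for x' y'
    proof -
      have x'n: "x' < n" "y' < n" using A Pxy blk_lt by auto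
      have bxy: "blk x' = blk y'" using blk_eq Pxy(1) A by auto
      show ?thesis
      proof (cases "e < f")
        case True
        have x': "e < x'" "x' \<le> f" using A True unfolding inb_def by auto
        have y': "y' \<le> e \<or> f < y'" using A True unfolding inb_def by auto
        have R1: "(adj F Ea Eb)\<^sup>*\<^sup>* (blk (Suc e mod n)) (blk (x' mod n))"
          using reach_arc[of "Suc e" x' F] x' x'n True unfolding F_def by auto
        have R2: "(adj F Ea Eb)\<^sup>*\<^sup>* (blk (y' mod n)) (blk (e mod n))"
        proof (cases "y' \<le> e")
          case True
          then show ?thesis using reach_arc[of y' e F] en \<open>e < f\<close> unfolding F_def by auto
        next
          case False
          then have fy: "f < y'" using y' by simp
          have "(adj F Ea Eb)\<^sup>*\<^sup>* (blk (y' mod n)) (blk (n mod n))"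
            using reach_arc[of y' n F] x'n fy \<open>e < f\<close> unfolding F_def by auto
          moreover have "(adj F Ea Eb)\<^sup>*\<^sup>* (blk (0 mod n)) (blk (e mod n))"
            using reach_arc[of 0 e F] en \<open>e < f\<close> unfolding F_def by auto
          ultimately show ?thesis by simp
        qed
        show ?thesis using R1 R2 bxy x'n en by simp
      next
        case False
        then have fe: "f < e" using ef by simp
        have x': "f < x'" "x' \<le> e" using A fe unfolding inb_def by auto
        have y': "y' \<le> f \<or> e < y'" using A fe unfolding inb_def by auto
        have R1: "(adj F Ea Eb)\<^sup>*\<^sup>* (blk (Suc e mod n)) (blk (y' mod n))"
        proof (cases "e < y'")
          case True
          then show ?thesis using reach_arc[of "Suc e" y' F] x'n fe unfolding F_def by auto
        next
          case False
          then have yf: "y' \<le> f" using y' by simp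
          have "(adj F Ea Eb)\<^sup>*\<^sup>* (blk (Suc e mod n)) (blk (n mod n))"
            using reach_arc[of "Suc e" n F] en fe unfolding F_def by auto
          moreover have "(adj F Ea Eb)\<^sup>*\<^sup>* (blk (0 mod n)) (blk (y' mod n))"
            using reach_arc[of 0 y' F] x'n yf fe unfolding F_def by auto
          ultimately show ?thesis by simp
        qed
        have R2: "(adj F Ea Eb)\<^sup>*\<^sup>* (blk (x' mod n)) (blk (e mod n))"
          using reach_arc[of x' e F] x' en unfolding F_def by auto
        show ?thesis using R1 R2 bxy x'n en by simp
      qed
    qed
    have reach: "(adj F Ea Eb)\<^sup>*\<^sup>* (Eb e) (Ea e)"
    proof (cases "inb e f x")
      case True then show ?thesis using key[of x y] Pxy by (simp add: Ea_simp Eb_simp)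
    next
      case False then show ?thesis using key[of y x] Pxy by (simp add: Ea_simp Eb_simp)
    qed
    have FE: "F \<subseteq> {..<n}" "e \<notin> F" "e \<in> {..<n}" using en unfolding F_def by auto
    obtain ws es where C: "ucycle_seq {..<n} Ea Eb ws es" "e \<in> set es" "set es \<subseteq> insert e F"
      using cycle_from_path[OF FE(3) FE(1) FE(2) reach] by blast
    have "simple_cycle {..<n} Ea Eb (set es)" using C(1) unfolding simple_cycle_def by blast
    then have "set es = Sof e" using Sof_unique[OF cact en] C(2) by blast
    then have "f \<in> insert e F" using f C(3) by blast
    then show False using ef unfolding F_def by simp
  qed
  then show ?thesis using en fn mem_cls by auto
qed

definition deg :: "nat set \<Rightarrow> nat set \<Rightarrow> nat" where
  "deg G X = (\<Sum>l\<in>G. (if blk l = X then 1 else 0) + (if blk (Suc l mod n) = X then 1 else 0))"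

lemma sum_rot:
  fixes g :: "nat \<Rightarrow> nat"
  assumes "0 < k" shows "(\<Sum>p<k. g (Suc p mod k)) = (\<Sum>p<k. g p)"
proof -
  obtain k' where k: "k = Suc k'" using assms by (cases k) auto
  have "(\<Sum>p<Suc k'. g (Suc p mod Suc k')) = (\<Sum>p<k'. g (Suc p mod Suc k')) + g 0"
    by (simp add: sum.lessThan_Suc)
  also have "(\<Sum>p<k'. g (Suc p mod Suc k')) = (\<Sum>p<k'. g (Suc p))"
    by (rule sum.cong) auto
  also have "(\<Sum>p<k'. g (Suc p)) + g 0 = (\<Sum>p<Suc k'. g p)"
    by (subst sum.lessThan_Suc_shift) simp
  finally show ?thesis using k by simp
qed

lemma deg_cycle_even:
  assumes C: "ucycle_seq {..<n} Ea Eb ws es" shows "even (deg (set es) X)"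
proof -
  define k where "k = length es"
  define h where "h l = (if blk l = X then 1 else 0) + (if blk (Suc l mod n) = X then (1::nat) else 0)" for l
  define g where "g p = (if ws!p = X then 1 else (0::nat))" for p
  have des: "distinct es" and k0: "0 < k" using C by (auto simp: ucycle_seq_def k_def)
  have "deg (set es) X = (\<Sum>l\<in>set es. h l)" unfolding deg_def h_def by simp
  also have "\<dots> = sum_list (map h es)" using des by (simp add: sum_list_distinct_conv_sum_set)
  also have "\<dots> = (\<Sum>i=0..<length (map h es). map h es ! i)" by (rule sum_list_sum_nth)
  also have "\<dots> = (\<Sum>p<k. h (es!p))" unfolding k_def atLeast0LessThan by (rule sum.cong) auto
  also have "\<dots> = (\<Sum>p<k. g p + g (Suc p mod k))"
  proof (rule sum.cong[OF refl])
    fix p assume "p \<in> {..<k}"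
    then have "{blk (es!p), blk (Suc (es!p) mod n)} = {ws!p, ws!(Suc p mod k)}"
      using ucycle_ends[OF C, of p] k_def by (simp add: Ea_simp Eb_simp)
    then show "h (es!p) = g p + g (Suc p mod k)" unfolding h_def g_def by (auto simp: doubleton_eq_iff)
  qed
  also have "\<dots> = (\<Sum>p<k. g p) + (\<Sum>p<k. g (Suc p mod k))" by (simp add: sum.distrib)
  also have "\<dots> = 2 * (\<Sum>p<k. g p)" using sum_rot[OF k0, of g] by simp
  finally show ?thesis by simp
qed

lemma deg_closed_even:
  assumes cact: "is_cactus \<pi> {..<n} Ea Eb"
  shows "G \<subseteq> {..<n} \<Longrightarrow> (\<forall>l\<in>G. Sof l \<subseteq> G) \<Longrightarrow> even (deg G X)"
proof (induction "card G" arbitrary: G rule: less_induct)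
  case less
  show ?case
  proof (cases "G = {}")
    case True then show ?thesis by (simp add: deg_def)
  next
    case False
    then obtain l where l: "l \<in> G" by blast
    have ln: "l < n" using l less.prems by auto
    define T where "T = Sof l"
    have TG: "T \<subseteq> G" using less.prems l T_def by blast
    have lT: "l \<in> T" using Sof_props[OF cact ln] T_def by blast
    have finG: "finite G" using less.prems(1) finite_subset by blast
    have "G - T \<subset> G" using lT l by blast
    then have c: "card (G - T) < card G" by (rule psubset_card_mono[OF finG])
    have s: "G - T \<subseteq> {..<n}" using less.prems by auto
    have cl: "\<forall>l'\<in>G - T. Sof l' \<subseteq> G - T"
    proof
      fix l' assume l': "l' \<in> G - T"
      have l'n: "l' < n" using l' less.prems by auto
      have "Sof l' \<inter> T = {}"
      proof (rule ccontr)
        assume "Sof l' \<inter> T \<noteq> {}"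
        then obtain f where f: "f \<in> Sof l'" "f \<in> T" by blast
        have fn: "f < n" using Sof_sub[OF cact l'n] f by auto
        have "Sof l' = Sof f" using Sof_unique[OF cact fn] Sof_props[OF cact l'n] f by blast
        moreover have "T = Sof f" using Sof_unique[OF cact fn] Sof_props[OF cact ln] f T_def by blast
        ultimately have "l' \<in> T" using Sof_props[OF cact l'n] by auto
        then show False using l' by simp
      qed
      then show "Sof l' \<subseteq> G - T" using less.prems l' by blast
    qed
    have e1: "even (deg (G - T) X)" using less.hyps[OF c s cl] .
    obtain ws es where C: "ucycle_seq {..<n} Ea Eb ws es" "T = set es"
      using Sof_props[OF cact ln] T_def unfolding simple_cycle_def by blast
    have e2: "even (deg T X)" using deg_cycle_even[OF C(1)] C(2) by simp
    have "deg G X = deg (G - T) X + deg T X" unfolding deg_def by (rule sum.subset_diff[OF TG finG])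
    then show ?thesis using e1 e2 by simp
  qed
qed

lemma trail_parity:
  fixes g :: "nat \<Rightarrow> nat"
  assumes "a \<le> b" shows "even ((\<Sum>l\<in>{a..<b}. g l + g (Suc l)) + g a + g b)"
  using assms
proof (induction b rule: dec_induct)
  case base then show ?case by simp
next
  case (step b)
  have "(\<Sum>l\<in>{a..<Suc b}. g l + g (Suc l)) = (\<Sum>l\<in>{a..<b}. g l + g (Suc l)) + (g b + g (Suc b))"
    using step.hyps by (simp add: sum.atLeastLessThan_Suc)
  then have E: "(\<Sum>l\<in>{a..<Suc b}. g l + g (Suc l)) + g a + g (Suc b)
      = ((\<Sum>l\<in>{a..<b}. g l + g (Suc l)) + g a + g b) + 2 * g (Suc b)" by simp
  have "even (((\<Sum>l\<in>{a..<b}. g l + g (Suc l)) + g a + g b) + 2 * g (Suc b))"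
    using step.IH dvd_triv_left[of 2 "g (Suc b)"] by (rule dvd_add)
  then show ?case unfolding E .
qed

lemma cactus_nc:
  assumes cact: "is_cactus \<pi> {..<n} Ea Eb" shows "noncrossing \<pi>"
proof (rule ccontr)
  assume "\<not> noncrossing \<pi>"
  then obtain a b c d P Q where abcd: "a < b" "b < c" "c < d" and PQ: "P \<in> \<pi>" "Q \<in> \<pi>" "P \<noteq> Q"
    and mem: "a \<in> P" "c \<in> P" "b \<in> Q" "d \<in> Q"
    unfolding noncrossing_def by blast
  have dn: "d < n" using PQ mem blk_lt by auto
  define G where "G = {a..<b}"
  have Gsub: "G \<subseteq> {..<n}" using abcd dn G_def by auto
  have clsG: "cls l \<subseteq> G" if l: "l \<in> G" for l
  proof
    fix m assume m: "m \<in> cls l"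
    have Rlm: "Rk l m" and mn: "m < n" using m mem_cls by auto
    have l': "a \<le> l" "l < b" using l G_def by auto
    show "m \<in> G"
    proof (rule ccontr)
      assume "m \<notin> G"
      then have "m < a \<or> b \<le> m" using G_def by auto
      then show False
      proof (elim disjE)
        assume ma: "m < a"
        have "inb l m a = inb l m c" using Rlm PQ(1) mem(1,2) unfolding Rk_def by blast
        then show False using ma l' abcd unfolding inb_def by auto
      next
        assume bm: "b \<le> m"
        show False
        proof (cases "m < c")
          case True
          have "inb l m b = inb l m d" using Rlm PQ(2) mem(3,4) unfolding Rk_def by blast
          then show False using bm True l' abcd unfolding inb_def by auto
        next
          case False
          have "inb l m a = inb l m c" using Rlm PQ(1) mem(1,2) unfolding Rk_def by blast
          then show False using False l' abcd unfolding inb_def by auto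
        qed
      qed
    qed
  qed
  have closed: "\<forall>l\<in>G. Sof l \<subseteq> G"
  proof
    fix l assume l: "l \<in> G"
    then have "l < n" using Gsub by auto
    then have "Sof l \<subseteq> cls l" using Sof_cls[OF cact] by blast
    then show "Sof l \<subseteq> G" using clsG[OF l] by blast
  qed
  have ev: "even (deg G P)" using deg_closed_even[OF cact Gsub closed] .
  define g where "g l = (if blk l = P then 1 else (0::nat))" for l
  have "deg G P = (\<Sum>l\<in>{a..<b}. g l + g (Suc l))"
    unfolding deg_def G_def g_def
  proof (rule sum.cong[OF refl])
    fix l assume "l \<in> {a..<b}"
    then have "Suc l < n" using abcd dn by auto
    then show "(if blk l = P then 1 else 0) + (if blk (Suc l mod n) = P then 1 else 0) =
          (if blk l = P then 1 else 0) + (if blk (Suc l) = P then 1 else (0::nat))" by simp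
  qed
  moreover have "even ((\<Sum>l\<in>{a..<b}. g l + g (Suc l)) + g a + g b)" using trail_parity abcd by simp
  moreover have "g a = 1" using blk_eq PQ(1) mem(1) g_def by simp
  moreover have "g b = 0" using blk_eq PQ(2) mem(3) PQ(3) g_def by simp
  ultimately show False using ev by simp
qed

end


lemma ucycle_alt:
  "ucycle_seq E s t ws es \<longleftrightarrow> length ws = length es \<and> es \<noteq> [] \<and> distinct ws \<and> distinct es \<and>
     set es \<subseteq> E \<and> (\<forall>j<length es. {s (es!j), t (es!j)} = {ws!j, ws!((j+1) mod length es)})"
  unfolding ucycle_seq_def by (simp add: doubleton_eq_iff)

lemma adj_alt: "adj F s t x y \<longleftrightarrow> (\<exists>e\<in>F. {s e, t e} = {x, y})"
  unfolding adj_def by (simp add: doubleton_eq_iff)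

lemma swap_ucycle:
  assumes "\<And>e. {s' e, t' e} = {s e, t e}"
  shows "ucycle_seq E s' t' = ucycle_seq E s t"
  unfolding ucycle_alt[abs_def] using assms by simp

lemma swap_simple_cycle:
  assumes "\<And>e. {s' e, t' e} = {s e, t e}"
  shows "simple_cycle E s' t' = simple_cycle E s t"
  unfolding simple_cycle_def[abs_def] using swap_ucycle[of s' t' s t E, OF assms] by simp

lemma swap_pads:
  assumes "\<And>e. {s' e, t' e} = {s e, t e}"
  shows "pads E s' t' = pads E s t"
  unfolding pads_def using swap_simple_cycle[of s' t' s t E, OF assms] by simp

lemma swap_cactus:
  assumes "\<And>e. {s' e, t' e} = {s e, t e}"
  shows "is_cactus V E s' t' = is_cactus V E s t"
proof -
  have "adj E s' t' = adj E s t" unfolding adj_alt[abs_def] using assms by simp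
  then have "mg_connected V E s' t' = mg_connected V E s t" unfolding mg_connected_alt by simp
  then show ?thesis unfolding is_cactus_def using swap_simple_cycle[of s' t' s t E, OF assms] by simp
qed

context cyc begin

lemma D_swap: "{quot \<pi> (dsrc n ccw) e, quot \<pi> (dtgt n ccw) e} = {Ea e, Eb e}"
  by (cases "ccw e") (auto simp: quot_def dsrc_def dtgt_def cyc_a_def cyc_b_def)

lemma Ds_simp: "quot \<pi> (dsrc n ccw) e = (if ccw e then blk e else blk (Suc e mod n))"
  by (simp add: quot_def dsrc_def)

lemma Dt_simp: "quot \<pi> (dtgt n ccw) e = (if ccw e then blk (Suc e mod n) else blk e)"
  by (simp add: quot_def dtgt_def)

lemma oriented_uniform:
  assumes oc: "is_oriented_cactus \<pi> {..<n} (quot \<pi> (dsrc n ccw)) (quot \<pi> (dtgt n ccw))"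
  shows "noncrossing \<pi> \<and> (\<forall>B\<in>K. (\<forall>i\<in>B. ccw i) \<or> (\<forall>i\<in>B. \<not> ccw i))"
proof -
  have cD: "is_cactus \<pi> {..<n} (quot \<pi> (dsrc n ccw)) (quot \<pi> (dtgt n ccw))"
    using oc unfolding is_oriented_cactus_def by (rule conjunct1)
  have eqc: "is_cactus \<pi> {..<n} (quot \<pi> (dsrc n ccw)) (quot \<pi> (dtgt n ccw)) = is_cactus \<pi> {..<n} Ea Eb"
    by (rule swap_cactus[of "quot \<pi> (dsrc n ccw)" "quot \<pi> (dtgt n ccw)" Ea Eb, OF D_swap])
  have c: "is_cactus \<pi> {..<n} Ea Eb" using eqc cD by (rule iffD1)
  have nc: "noncrossing \<pi>" using cactus_nc[OF c] .
  have "pads {..<n} (quot \<pi> (dsrc n ccw)) (quot \<pi> (dtgt n ccw)) = pads {..<n} Ea Eb"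
    by (rule swap_pads[of "quot \<pi> (dsrc n ccw)" "quot \<pi> (dtgt n ccw)" Ea Eb, OF D_swap])
  then have padsD: "pads {..<n} (quot \<pi> (dsrc n ccw)) (quot \<pi> (dtgt n ccw)) = K"
    using nc_pads[OF nc] by (rule trans)
  have "(\<forall>i\<in>B. ccw i) \<or> (\<forall>i\<in>B. \<not> ccw i)" if B: "B \<in> K" for B
  proof (rule ccontr)
    assume "\<not> ?thesis"
    then obtain p q where pq: "p \<in> B" "q \<in> B" "ccw p" "\<not> ccw q" by blast
    obtain i0 where i0: "i0 < n" "B = cls i0" using B K_iff by blast
    define L where "L = sorted_list_of_set (cls i0)"
    define k where "k = length L"
    have setL: "set L = B" using cls_fin L_def i0 by simp
    have CC: "(\<forall>j<length L. blk (Suc (L!j) mod n) = blk (L!(Suc j mod length L)))"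
      using class_cycle[OF nc i0(1) L_def] by blast
    have "p \<in> set L" "q \<in> set L" using pq setL by simp_all
    then obtain a b where a: "a < k" "L!a = p" and b: "b < k" "L!b = q"
      by (auto simp: in_set_conv_nth k_def)
    obtain r where r: "r < k" "ccw (L!r)" "\<not> ccw (L!(Suc r mod k))"
      using change_exists[of a k b "\<lambda>r. ccw (L!r)"] a b pq by auto
    define i where "i = L!r"
    define i' where "i' = L!(Suc r mod k)"
    have s1: "Suc r mod k < k" using r by simp
    have ii': "i \<noteq> i'" using r i_def i'_def by auto
    have iB: "i \<in> B" "i' \<in> B" using setL r s1 i_def i'_def k_def nth_mem by blast+
    have t1: "quot \<pi> (dtgt n ccw) i = blk i'"
      using CC r(1,2) i_def i'_def k_def by (simp add: Dt_simp)
    have t2: "quot \<pi> (dtgt n ccw) i' = blk i'"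
      using r(3) i'_def by (simp add: Dt_simp)
    have "B \<in> pads {..<n} (quot \<pi> (dsrc n ccw)) (quot \<pi> (dtgt n ccw))" using padsD B by simp
    moreover have "\<forall>S\<in>pads {..<n} (quot \<pi> (dsrc n ccw)) (quot \<pi> (dtgt n ccw)).
        \<exists>ws es. dcycle_seq {..<n} (quot \<pi> (dsrc n ccw)) (quot \<pi> (dtgt n ccw)) ws es \<and> S = set es"
      using oc unfolding is_oriented_cactus_def by (rule conjunct2)
    ultimately have "\<exists>ws es. dcycle_seq {..<n} (quot \<pi> (dsrc n ccw)) (quot \<pi> (dtgt n ccw)) ws es \<and> B = set es"
      by blast
    then obtain ws es where D: "dcycle_seq {..<n} (quot \<pi> (dsrc n ccw)) (quot \<pi> (dtgt n ccw)) ws es"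
      and Bes: "B = set es"
      by blast
    define m where "m = length es"
    have lws: "length ws = m" and dws: "distinct ws" and m0: "0 < m"
      and Dt: "\<forall>j<m. quot \<pi> (dtgt n ccw) (es!j) = ws!(Suc j mod m)"
      using D unfolding dcycle_seq_def m_def by auto
    obtain p1 where p1: "p1 < m" "es!p1 = i" using iB Bes by (auto simp: in_set_conv_nth m_def)
    obtain p2 where p2: "p2 < m" "es!p2 = i'" using iB Bes by (auto simp: in_set_conv_nth m_def)
    have e1: "quot \<pi> (dtgt n ccw) (es!p1) = ws!(Suc p1 mod m)" using Dt p1(1) by blast
    have e2: "quot \<pi> (dtgt n ccw) (es!p2) = ws!(Suc p2 mod m)" using Dt p2(1) by blast
    have "ws!(Suc p1 mod m) = ws!(Suc p2 mod m)" using e1 e2 p1(2) p2(2) t1 t2 by simp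
    then have "Suc p1 mod m = Suc p2 mod m" using dws lws m0 by (simp add: nth_eq_iff_index_eq)
    then have "p1 = p2" by (rule mod_suc_inj[OF p1(1) p2(1)])
    then show False using p1 p2 ii' by simp
  qed
  note U = this
  show ?thesis
  proof (intro conjI ballI)
    show "noncrossing \<pi>" by (rule nc)
    fix B assume "B \<in> K" then show "(\<forall>i\<in>B. ccw i) \<or> (\<forall>i\<in>B. \<not> ccw i)" by (rule U)
  qed
qed

lemma uniform_oriented:
  assumes nc: "noncrossing \<pi>" and U: "\<forall>B\<in>K. (\<forall>i\<in>B. ccw i) \<or> (\<forall>i\<in>B. \<not> ccw i)"
  shows "is_oriented_cactus \<pi> {..<n} (quot \<pi> (dsrc n ccw)) (quot \<pi> (dtgt n ccw))"
  unfolding is_oriented_cactus_def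
proof (intro conjI ballI)
  show "is_cactus \<pi> {..<n} (quot \<pi> (dsrc n ccw)) (quot \<pi> (dtgt n ccw))"
    using swap_cactus[of "quot \<pi> (dsrc n ccw)" "quot \<pi> (dtgt n ccw)" Ea Eb, OF D_swap] nc_cactus[OF nc] by (rule iffD2)
  have "pads {..<n} (quot \<pi> (dsrc n ccw)) (quot \<pi> (dtgt n ccw)) = pads {..<n} Ea Eb"
    by (rule swap_pads[of "quot \<pi> (dsrc n ccw)" "quot \<pi> (dtgt n ccw)" Ea Eb, OF D_swap])
  then have padsD: "pads {..<n} (quot \<pi> (dsrc n ccw)) (quot \<pi> (dtgt n ccw)) = K"
    using nc_pads[OF nc] by (rule trans)
  fix S assume "S \<in> pads {..<n} (quot \<pi> (dsrc n ccw)) (quot \<pi> (dtgt n ccw))"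
  then have SK: "S \<in> K" using padsD by simp
  then obtain i0 where i0: "i0 < n" "S = cls i0" using K_iff by blast
  define L where "L = sorted_list_of_set (cls i0)"
  define k where "k = length L"
  have setL: "set L = S" using cls_fin L_def i0 by simp
  have CC0: "\<forall>j<length L. blk (Suc (L!j) mod n) = blk (L!(Suc j mod length L))"
    and UC: "ucycle_seq {..<n} Ea Eb (map blk L) L"
    using class_cycle[OF nc i0(1) L_def] by (rule conjunct1, rule conjunct2)
  have CC: "\<forall>j<k. blk (Suc (L!j) mod n) = blk (L!(Suc j mod k))" using CC0 unfolding k_def .
  have basic: "length (map blk L) = k" "length L = k" "0 < k" "distinct (map blk L)" "distinct L" "set L \<subseteq> {..<n}"
    using UC unfolding ucycle_seq_def k_def by auto
  from U SK have "(\<forall>i\<in>S. ccw i) \<or> (\<forall>i\<in>S. \<not> ccw i)" by blast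
  then show "\<exists>ws es. dcycle_seq {..<n} (quot \<pi> (dsrc n ccw)) (quot \<pi> (dtgt n ccw)) ws es \<and> S = set es"
  proof
    assume A: "\<forall>i\<in>S. ccw i"
    have "dcycle_seq {..<n} (quot \<pi> (dsrc n ccw)) (quot \<pi> (dtgt n ccw)) (map blk L) L"
      unfolding dcycle_seq_def
    proof (intro conjI allI impI)
      show "length (map blk L) = length L" "L \<noteq> []" "distinct (map blk L)" "distinct L" "set L \<subseteq> {..<n}"
        using basic by auto
      fix j assume j: "j < length L"
      have "L!j \<in> S" using nth_mem[OF j] setL by simp
      then have c: "ccw (L!j)" using A by blast
      have s1: "Suc j mod k < k" using basic by simp
      show "quot \<pi> (dsrc n ccw) (L ! j) = map blk L ! j" using c j by (simp add: Ds_simp)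
      show "quot \<pi> (dtgt n ccw) (L ! j) = map blk L ! ((j + 1) mod length L)"
        using c j CC s1 basic by (simp add: Dt_simp)
    qed
    then show ?thesis using setL by blast
  next
    assume A: "\<forall>i\<in>S. \<not> ccw i"
    have H: "\<forall>j<k. quot \<pi> (dsrc n ccw) (L!j) = (map blk L)!(Suc j mod k) \<and>
                  quot \<pi> (dtgt n ccw) (L!j) = (map blk L)!j"
    proof (intro allI impI conjI)
      fix j assume j: "j < k"
      have "L!j \<in> S" using nth_mem[of j L] j basic setL by simp
      then have c: "\<not> ccw (L!j)" using A by blast
      have s1: "Suc j mod k < k" using basic by simp
      show "quot \<pi> (dsrc n ccw) (L!j) = (map blk L)!(Suc j mod k)"
        using c j CC s1 basic by (simp add: Ds_simp)
      show "quot \<pi> (dtgt n ccw) (L!j) = (map blk L)!j" using c j basic by (simp add: Dt_simp)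
    qed
    have "dcycle_seq {..<n} (quot \<pi> (dsrc n ccw)) (quot \<pi> (dtgt n ccw))
            (map (\<lambda>m. (map blk L)!((k-m) mod k)) [0..<k]) (rev L)"
      by (rule dcycle_rev[OF basic H])
    moreover have "S = set (rev L)" using setL by simp
    ultimately show ?thesis by blast
  qed
qed

end

theorem proposition2p4:
  fixes n :: nat and \<pi> :: "nat set set" and ccw :: "nat \<Rightarrow> bool"
  assumes "n \<ge> 1" and "partition_on {..<n} \<pi>"
  shows "(is_cactus \<pi> {..<n} (quot \<pi> (cyc_a n)) (quot \<pi> (cyc_b n)) \<longleftrightarrow> noncrossing \<pi>)
    \<and> (noncrossing \<pi> \<longrightarrow>
         pads {..<n} (quot \<pi> (cyc_a n)) (quot \<pi> (cyc_b n)) = kreweras n \<pi> \<and>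
         (\<forall>B\<in>kreweras n \<pi>.
            (\<forall>j<length (sorted_list_of_set B).
               blockof \<pi> (Suc (sorted_list_of_set B ! j) mod n) =
               blockof \<pi> (sorted_list_of_set B ! ((j+1) mod length (sorted_list_of_set B)))) \<and>
            ucycle_seq {..<n} (quot \<pi> (cyc_a n)) (quot \<pi> (cyc_b n))
              (map (blockof \<pi>) (sorted_list_of_set B)) (sorted_list_of_set B)))
    \<and> (is_oriented_cactus \<pi> {..<n} (quot \<pi> (dsrc n ccw)) (quot \<pi> (dtgt n ccw)) \<longleftrightarrow>
         noncrossing \<pi> \<and> (\<forall>B\<in>kreweras n \<pi>. (\<forall>i\<in>B. ccw i) \<or> (\<forall>i\<in>B. \<not> ccw i)))"
proof -
  interpret cyc n \<pi> using assms by unfold_locales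
  have P1: "is_cactus \<pi> {..<n} (quot \<pi> (cyc_a n)) (quot \<pi> (cyc_b n)) \<longleftrightarrow> noncrossing \<pi>"
    using nc_cactus cactus_nc by blast
  have P2: "pads {..<n} (quot \<pi> (cyc_a n)) (quot \<pi> (cyc_b n)) = kreweras n \<pi> \<and>
         (\<forall>B\<in>kreweras n \<pi>.
            (\<forall>j<length (sorted_list_of_set B).
               blockof \<pi> (Suc (sorted_list_of_set B ! j) mod n) =
               blockof \<pi> (sorted_list_of_set B ! ((j+1) mod length (sorted_list_of_set B)))) \<and>
            ucycle_seq {..<n} (quot \<pi> (cyc_a n)) (quot \<pi> (cyc_b n))
              (map (blockof \<pi>) (sorted_list_of_set B)) (sorted_list_of_set B))"
    if nc: "noncrossing \<pi>"
  proof
    show "pads {..<n} (quot \<pi> (cyc_a n)) (quot \<pi> (cyc_b n)) = kreweras n \<pi>"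
      using nc_pads[OF nc] kreweras_eq[OF nc] by simp
    show "\<forall>B\<in>kreweras n \<pi>.
            (\<forall>j<length (sorted_list_of_set B).
               blockof \<pi> (Suc (sorted_list_of_set B ! j) mod n) =
               blockof \<pi> (sorted_list_of_set B ! ((j+1) mod length (sorted_list_of_set B)))) \<and>
            ucycle_seq {..<n} (quot \<pi> (cyc_a n)) (quot \<pi> (cyc_b n))
              (map (blockof \<pi>) (sorted_list_of_set B)) (sorted_list_of_set B)"
    proof
      fix B assume "B \<in> kreweras n \<pi>"
      then have "B \<in> K" using kreweras_eq[OF nc] by simp
      then obtain i0 where i0: "i0 < n" "B = cls i0" using K_iff by blast
      show "(\<forall>j<length (sorted_list_of_set B).
               blockof \<pi> (Suc (sorted_list_of_set B ! j) mod n) =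
               blockof \<pi> (sorted_list_of_set B ! ((j+1) mod length (sorted_list_of_set B)))) \<and>
            ucycle_seq {..<n} (quot \<pi> (cyc_a n)) (quot \<pi> (cyc_b n))
              (map (blockof \<pi>) (sorted_list_of_set B)) (sorted_list_of_set B)"
        using class_cycle[OF nc i0(1) refl] i0(2) by simp
    qed
  qed
  have P3: "is_oriented_cactus \<pi> {..<n} (quot \<pi> (dsrc n ccw)) (quot \<pi> (dtgt n ccw)) \<longleftrightarrow>
         noncrossing \<pi> \<and> (\<forall>B\<in>kreweras n \<pi>. (\<forall>i\<in>B. ccw i) \<or> (\<forall>i\<in>B. \<not> ccw i))"
  proof
    assume oc: "is_oriented_cactus \<pi> {..<n} (quot \<pi> (dsrc n ccw)) (quot \<pi> (dtgt n ccw))"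
    then have nc: "noncrossing \<pi>" using oriented_uniform by blast
    then show "noncrossing \<pi> \<and> (\<forall>B\<in>kreweras n \<pi>. (\<forall>i\<in>B. ccw i) \<or> (\<forall>i\<in>B. \<not> ccw i))"
      using oriented_uniform[OF oc] kreweras_eq[OF nc] by simp
  next
    assume H: "noncrossing \<pi> \<and> (\<forall>B\<in>kreweras n \<pi>. (\<forall>i\<in>B. ccw i) \<or> (\<forall>i\<in>B. \<not> ccw i))"
    then have nc: "noncrossing \<pi>" by blast
    have "\<forall>B\<in>K. (\<forall>i\<in>B. ccw i) \<or> (\<forall>i\<in>B. \<not> ccw i)" using H kreweras_eq[OF nc] by simp
    then show "is_oriented_cactus \<pi> {..<n} (quot \<pi> (dsrc n ccw)) (quot \<pi> (dtgt n ccw))"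
      using uniform_oriented[OF nc] by blast
  qed
  show ?thesis by (rule conjI[OF P1 conjI[OF impI[OF P2] P3]])
qed


end
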